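(* There exist an infinite family of pairs $(T_1,T_2)$ of unrooted binary phylogenetic trees on a common leaf set $X$ (with $n=|X|$ unbounded over the family) and a function $h$ with $h(n) \to 0$ as $n \to \infty$ such that, for every pair in the family, taking $\mathcal{T}=\{T_1,T_2\}$, $\mathcal{Q}$ the set of incompatible quartets of $T_1$ and $T_2$, $\mathrm{OPT}_{\mathrm{int}}$ the optimal value of the integer program $$\text{minimize } \sum_{e \in E(T_1)} x_e \quad \text{s.t. } \sum_{e \in L(Q)} x_e \ge 1 \ \ \forall Q \in \mathcal{Q}, \qquad x_e \in \{0,1\}\ \ \forall e \in E(T_1),$$ and $\mathrm{OPT}_{\mathrm{frac}}$ the optimal value of its linear relaxation (with $x_e \in\{0,1\}$ replaced by $x_e \ge 0$), we have $\mathrm{OPT}_{\mathrm{frac}} > 0$ and $\mathrm{OPT}_{\mathrm{int}} / \mathrm{OPT}_{\mathrm{frac}} \ge 4 - h(n)$. In particular, the integrality gap of this integer program is at least $4 - o(1)$ even when restricted to two input trees.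
   Context: A (binary) phylogenetic tree on a finite set $X$ is an unrooted tree whose internal vertices have degree 3 and whose leaves are bijectively labelled by $X$. Two phylogenetic trees on $X$ are isomorphic ($\cong$) if there is a graph isomorphism between them fixing every leaf label. For $Y \subseteq X$, $T[Y]$ is the minimal subtree of $T$ connecting the leaves in $Y$, and $T|_Y$ is obtained from $T[Y]$ by suppressing all degree-2 vertices. A quartet is a 4-element subset of $X$; for $Q=\{a,b,c,d\}$, $ab|cd$ is the tree on $Q$ where $a,b$ share a neighbour $u$, $c,d$ share a neighbour $v$, and $u,v$ are adjacent. If $T_1|_Q \cong ab|cd$, $L(Q)$ is the set of edges of $T_1[\{a,b\}] \cup T_1[\{c,d\}]$. $Q$ is an incompatible quartet of $T_1,T_2$ if $T_1|_Q \not\cong T_2|_Q$. *)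

theory Defs
  imports Complex_Main
begin

text \<open>Vertices of a phylogenetic tree on a leaf set X of type 'x: leaves are Inl x
  (labelled by x), internal vertices are Inr i.\<close>

type_synonym 'x vert = "'x + nat"
type_synonym 'x ptree = "'x vert set \<times> 'x vert set set"

definition deg :: "'x vert set set \<Rightarrow> 'x vert \<Rightarrow> nat" where
  "deg E v = card {e \<in> E. v \<in> e}"

definition simple_path :: "'x vert set set \<Rightarrow> 'x vert list \<Rightarrow> bool" where
  "simple_path E p \<longleftrightarrow> p \<noteq> [] \<and> distinct p \<and>
     (\<forall>i. Suc i < length p \<longrightarrow> {p ! i, p ! Suc i} \<in> E)"

definition path_edges :: "'x vert list \<Rightarrow> 'x vert set set" where
  "path_edges p = {{p ! i, p ! Suc i} | i. Suc i < length p}"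

definition connected_graph :: "'x ptree \<Rightarrow> bool" where
  "connected_graph T \<longleftrightarrow> (\<forall>u\<in>fst T. \<forall>v\<in>fst T.
     \<exists>p. simple_path (snd T) p \<and> hd p = u \<and> last p = v)"

definition is_tree :: "'x ptree \<Rightarrow> bool" where
  "is_tree T \<longleftrightarrow> finite (fst T) \<and> fst T \<noteq> {} \<and>
     snd T \<subseteq> {{u, v} | u v. u \<in> fst T \<and> v \<in> fst T \<and> u \<noteq> v} \<and>
     connected_graph T \<and> card (snd T) + 1 = card (fst T)"

definition phylo_tree :: "'x set \<Rightarrow> 'x ptree \<Rightarrow> bool" where
  "phylo_tree X T \<longleftrightarrow> is_tree T \<and> finite X \<and>
     fst T \<inter> range Inl = Inl ` X \<and>
     (\<forall>x\<in>X. deg (snd T) (Inl x) = 1) \<and>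
     (\<forall>v\<in>fst T - Inl ` X. deg (snd T) v = 3)"

definition span_edges :: "'x ptree \<Rightarrow> 'x set \<Rightarrow> 'x vert set set" where
  "span_edges T Y = \<Union> {path_edges p | p. simple_path (snd T) p \<and>
      hd p \<in> Inl ` Y \<and> last p \<in> Inl ` Y}"

definition span_tree :: "'x ptree \<Rightarrow> 'x set \<Rightarrow> 'x ptree" where
  "span_tree T Y = (Inl ` Y \<union> \<Union> (span_edges T Y), span_edges T Y)"

text \<open>T|_Y: suppress all degree-2 vertices of T[Y]; the remaining vertices are joined
  by an edge iff they are joined in T[Y] by a path all of whose interior vertices
  were suppressed.\<close>
definition restrict_tree :: "'x ptree \<Rightarrow> 'x set \<Rightarrow> 'x ptree" where
  "restrict_tree T Y =
    (let S = span_tree T Y;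
         W = {v \<in> fst S. deg (snd S) v \<noteq> 2}
     in (W, {{u, w} | u w. u \<in> W \<and> w \<in> W \<and> u \<noteq> w \<and>
            (\<exists>p. simple_path (snd S) p \<and> hd p = u \<and> last p = w \<and>
                 (\<forall>i. 0 < i \<and> Suc i < length p \<longrightarrow> p ! i \<notin> W))}))"

definition tree_iso :: "'x ptree \<Rightarrow> 'x ptree \<Rightarrow> bool" where
  "tree_iso T1 T2 \<longleftrightarrow> (\<exists>f. bij_betw f (fst T1) (fst T2) \<and>
     (\<forall>u\<in>fst T1. \<forall>v\<in>fst T1. {u, v} \<in> snd T1 \<longleftrightarrow> {f u, f v} \<in> snd T2) \<and>
     (\<forall>x. Inl x \<in> fst T1 \<longrightarrow> f (Inl x) = Inl x))"

definition quartet_tree :: "'x \<Rightarrow> 'x \<Rightarrow> 'x \<Rightarrow> 'x \<Rightarrow> 'x ptree" where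
  "quartet_tree a b c d =
     ({Inl a, Inl b, Inl c, Inl d, Inr 0, Inr 1},
      {{Inl a, Inr 0}, {Inl b, Inr 0}, {Inl c, Inr 1}, {Inl d, Inr 1}, {Inr 0, Inr 1}})"

definition incompatible_quartets :: "'x set \<Rightarrow> 'x ptree \<Rightarrow> 'x ptree \<Rightarrow> 'x set set" where
  "incompatible_quartets X T1 T2 = {Q. Q \<subseteq> X \<and> card Q = 4 \<and>
      \<not> tree_iso (restrict_tree T1 Q) (restrict_tree T2 Q)}"

definition L_edges :: "'x ptree \<Rightarrow> 'x set \<Rightarrow> 'x vert set set" where
  "L_edges T Q = {e. \<exists>a b c d. Q = {a, b, c, d} \<and>
      tree_iso (restrict_tree T Q) (quartet_tree a b c d) \<and>
      e \<in> span_edges T {a, b} \<union> span_edges T {c, d}}"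

definition ip_feasible :: "'x set \<Rightarrow> 'x ptree \<Rightarrow> 'x ptree \<Rightarrow> ('x vert set \<Rightarrow> real) \<Rightarrow> bool" where
  "ip_feasible X T1 T2 x \<longleftrightarrow>
     (\<forall>Q\<in>incompatible_quartets X T1 T2. (\<Sum>e\<in>L_edges T1 Q. x e) \<ge> 1) \<and>
     (\<forall>e\<in>snd T1. x e \<in> {0, 1})"

definition lp_feasible :: "'x set \<Rightarrow> 'x ptree \<Rightarrow> 'x ptree \<Rightarrow> ('x vert set \<Rightarrow> real) \<Rightarrow> bool" where
  "lp_feasible X T1 T2 x \<longleftrightarrow>
     (\<forall>Q\<in>incompatible_quartets X T1 T2. (\<Sum>e\<in>L_edges T1 Q. x e) \<ge> 1) \<and>
     (\<forall>e\<in>snd T1. x e \<ge> 0)"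

definition opt_int :: "'x set \<Rightarrow> 'x ptree \<Rightarrow> 'x ptree \<Rightarrow> real" where
  "opt_int X T1 T2 = Inf {(\<Sum>e\<in>snd T1. x e) | x. ip_feasible X T1 T2 x}"

definition opt_frac :: "'x set \<Rightarrow> 'x ptree \<Rightarrow> 'x ptree \<Rightarrow> real" where
  "opt_frac X T1 T2 = Inf {(\<Sum>e\<in>snd T1. x e) | x. lp_feasible X T1 T2 x}"

end

theory Submission
  imports Defs
begin

fun pe :: "'x vert list \<Rightarrow> 'x vert set set" where
  "pe [] = {}" | "pe [x] = {}" | "pe (x # y # r) = insert {x, y} (pe (y # r))"

lemma path_edges_pe: "path_edges p = pe p"
proof (induction p rule: pe.induct)
  case 1 then show ?case by (simp add: path_edges_def)
next
  case (2 x) then show ?case by (simp add: path_edges_def)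
next
  case (3 x y r)
  have "path_edges (x # y # r) = insert {x, y} (path_edges (y # r))"
  proof
    show "path_edges (x # y # r) \<subseteq> insert {x, y} (path_edges (y # r))"
    proof
      fix e assume "e \<in> path_edges (x # y # r)"
      then obtain i where e: "e = {(x # y # r) ! i, (x # y # r) ! Suc i}" "Suc i < length (x # y # r)"
        by (auto simp: path_edges_def)
      show "e \<in> insert {x, y} (path_edges (y # r))"
      proof (cases i)
        case 0 then show ?thesis using e by simp
      next
        case (Suc j) then show ?thesis using e by (auto simp: path_edges_def)
      qed
    qed
    show "insert {x, y} (path_edges (y # r)) \<subseteq> path_edges (x # y # r)"
      unfolding path_edges_def
    proof (intro subsetI, elim insertE)
      fix e assume "e = {x, y}" then show "e \<in> {{(x # y # r) ! i, (x # y # r) ! Suc i} |i. Suc i < length (x # y # r)}"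
        by (intro CollectI exI[of _ 0]) auto
    next
      fix e assume "e \<in> {{(y # r) ! i, (y # r) ! Suc i} |i. Suc i < length (y # r)}"
      then obtain i where "e = {(y # r) ! i, (y # r) ! Suc i}" "Suc i < length (y # r)" by auto
      then show "e \<in> {{(x # y # r) ! i, (x # y # r) ! Suc i} |i. Suc i < length (x # y # r)}"
        by (intro CollectI exI[of _ "Suc i"]) auto
    qed
  qed
  then show ?case using 3 by simp
qed

lemma chain_pe: "(\<forall>i. Suc i < length p \<longrightarrow> {p ! i, p ! Suc i} \<in> E) \<longleftrightarrow> pe p \<subseteq> E"
  by (auto simp: path_edges_pe[symmetric] path_edges_def)

lemma simple_path_pe: "simple_path E p \<longleftrightarrow> p \<noteq> [] \<and> distinct p \<and> pe p \<subseteq> E"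
  unfolding simple_path_def chain_pe by simp

lemma pe_Cons: "pe (x # xs) = (if xs = [] then {} else insert {x, hd xs} (pe xs))"
  by (cases xs) auto

lemma pe_append: "pe (xs @ ys) = pe xs \<union> pe ys \<union> (if xs \<noteq> [] \<and> ys \<noteq> [] then {{last xs, hd ys}} else {})"
proof (induction xs)
  case Nil then show ?case by simp
next
  case (Cons x xs)
  show ?case
  proof (cases "xs = []")
    case True then show ?thesis by (simp add: pe_Cons)
  next
    case False
    then have "pe ((x # xs) @ ys) = insert {x, hd xs} (pe (xs @ ys))" by (simp add: pe_Cons)
    also have "\<dots> = insert {x, hd xs} (pe xs \<union> pe ys \<union> (if ys \<noteq> [] then {{last xs, hd ys}} else {}))"
      using Cons False by simp
    finally show ?thesis using False by (simp add: pe_Cons)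
  qed
qed

lemma pe_Cons_ne: "xs \<noteq> [] \<Longrightarrow> pe (x # xs) = insert {x, hd xs} (pe xs)"
  by (simp add: pe_Cons)

lemma pe_snoc: "xs \<noteq> [] \<Longrightarrow> pe (xs @ [y]) = insert {last xs, y} (pe xs)"
  by (simp add: pe_append)

lemma pe_rev: "pe (rev xs) = pe xs"
proof (induction xs)
  case Nil then show ?case by simp
next
  case (Cons x xs)
  show ?case
  proof (cases "xs = []")
    case True then show ?thesis by simp
  next
    case False
    have "pe (rev (x # xs)) = pe (rev xs) \<union> {{last (rev xs), x}}"
      using False by (simp add: pe_append)
    also have "\<dots> = insert {x, hd xs} (pe xs)" using Cons False by (simp add: last_rev insert_commute)
    finally show ?thesis using False by (simp add: pe_Cons)
  qed
qed

lemma pe_map_upt: "pe (map f [k..<Suc l]) = {{f i, f (Suc i)} | i. k \<le> i \<and> i < l}"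
proof (induction l)
  case 0 then show ?case by (cases k) auto
next
  case (Suc l)
  show ?case
  proof (cases "k \<le> Suc l")
    case True
    have "[k..<Suc (Suc l)] = [k..<Suc l] @ [Suc l]" using True by simp
    then show ?thesis using Suc True
      by (auto simp: pe_append last_map less_Suc_eq)
  next
    case False
    then show ?thesis by auto
  qed
qed

lemma interior_iff:
  assumes "distinct p" "p \<noteq> []"
  shows "(\<forall>i. 0 < i \<and> Suc i < length p \<longrightarrow> p ! i \<notin> W) \<longleftrightarrow>
         (\<forall>v\<in>set p. v \<noteq> hd p \<longrightarrow> v \<noteq> last p \<longrightarrow> v \<notin> W)"
proof
  assume H: "\<forall>i. 0 < i \<and> Suc i < length p \<longrightarrow> p ! i \<notin> W"
  show "\<forall>v\<in>set p. v \<noteq> hd p \<longrightarrow> v \<noteq> last p \<longrightarrow> v \<notin> W"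
  proof (intro ballI impI)
    fix v assume "v \<in> set p" "v \<noteq> hd p" "v \<noteq> last p"
    then obtain i where i: "i < length p" "p ! i = v" by (auto simp: in_set_conv_nth)
    have "i \<noteq> 0" using i \<open>v \<noteq> hd p\<close> assms by (metis hd_conv_nth)
    moreover have "Suc i \<noteq> length p" using i \<open>v \<noteq> last p\<close> assms by (metis diff_Suc_1 last_conv_nth)
    ultimately show "v \<notin> W" using H i by auto
  qed
next
  assume H: "\<forall>v\<in>set p. v \<noteq> hd p \<longrightarrow> v \<noteq> last p \<longrightarrow> v \<notin> W"
  show "\<forall>i. 0 < i \<and> Suc i < length p \<longrightarrow> p ! i \<notin> W"
  proof (intro allI impI)
    fix i assume i: "0 < i \<and> Suc i < length p"
    have "p ! i \<noteq> hd p" using i assms by (auto simp: hd_conv_nth nth_eq_iff_index_eq)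
    moreover have "p ! i \<noteq> last p" using i assms by (auto simp: last_conv_nth nth_eq_iff_index_eq)
    ultimately show "p ! i \<notin> W" using H i by auto
  qed
qed

definition sp :: "nat \<Rightarrow> nat \<Rightarrow> nat list" where
  "sp k l = (if k \<le> l then [k..<Suc l] else rev [l..<Suc k])"

lemma set_sp: "set (sp k l) = {min k l..max k l}"
  by (auto simp: sp_def)

lemma sp_refl[simp]: "sp k k = [k]" by (simp add: sp_def)
lemma sp_ne[simp]: "sp k l \<noteq> []" by (simp add: sp_def)
lemma hd_sp[simp]: "hd (sp k l) = k"
proof (cases "k \<le> l")
  case True then show ?thesis by (simp add: sp_def upt_conv_Cons del: upt_Suc)
next
  case False then show ?thesis by (simp add: sp_def hd_rev)
qed
lemma last_sp[simp]: "last (sp k l) = l" by (simp add: sp_def last_rev)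
lemma distinct_sp[simp]: "distinct (sp k l)" by (simp add: sp_def)
lemma sp_self_in[simp]: "k \<in> set (sp k l)" by (simp add: set_sp)
lemma sp_other_in[simp]: "l \<in> set (sp k l)" by (simp add: set_sp)

lemma sp_step:
  assumes "k' = Suc k \<or> k = Suc k'" "k \<notin> set (sp k' t)"
  shows "k # sp k' t = sp k t"
  using assms(1)
proof
  assume h: "k' = Suc k"
  then have "Suc k \<le> t" using assms(2) by (auto simp: set_sp)
  then show ?thesis using h by (simp add: sp_def upt_conv_Cons)
next
  assume h: "k = Suc k'"
  then have "t \<le> k'" using assms(2) by (auto simp: set_sp)
  then show ?thesis using h by (auto simp: sp_def)
qed

definition spe :: "nat \<Rightarrow> 'x vert set" where "spe k = {Inr k, Inr (Suc k)}"

lemma pe_sp: "pe (map Inr (sp k l) :: 'x vert list) = spe ` {min k l..<max k l}"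
proof (cases "k \<le> l")
  case True
  then show ?thesis by (auto simp: sp_def pe_map_upt spe_def simp del: upt_Suc)
next
  case False
  then have "pe (map Inr (sp k l) :: 'x vert list) = pe (map Inr [l..<Suc k] :: 'x vert list)"
    by (simp add: sp_def rev_map[symmetric] pe_rev del: upt_Suc)
  then show ?thesis using False by (auto simp: pe_map_upt spe_def simp del: upt_Suc)
qed

locale cat =
  fixes n :: nat and \<sigma> \<rho> :: "nat \<Rightarrow> nat"
  assumes n4: "4 \<le> n"
    and sr: "\<And>i. i < n \<Longrightarrow> \<sigma> i < n \<and> \<rho> (\<sigma> i) = i"
    and rs: "\<And>x. x < n \<Longrightarrow> \<rho> x < n \<and> \<sigma> (\<rho> x) = x"
begin

definition cc :: "nat \<Rightarrow> nat" where
  "cc i = (if i = 0 then 1 else if n - 1 \<le> i then n - 2 else i)"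
definition att :: "nat \<Rightarrow> nat" where "att x = cc (\<rho> x)"
definition V :: "nat vert set" where "V = Inl ` {0..<n} \<union> Inr ` {1..n-2}"
definition pend :: "nat \<Rightarrow> nat vert set" where "pend x = {Inl x, Inr (att x)}"
definition E :: "nat vert set set" where "E = pend ` {0..<n} \<union> spe ` {1..<n-2}"
definition T :: "nat ptree" where "T = (V, E)"

lemma cc_range: "i < n \<Longrightarrow> 1 \<le> cc i \<and> cc i \<le> n - 2"
  using n4 by (auto simp: cc_def)

lemma att_range: "x < n \<Longrightarrow> 1 \<le> att x \<and> att x \<le> n - 2"
  using cc_range rs by (simp add: att_def)

lemma V_Inl[simp]: "Inl a \<in> V \<longleftrightarrow> a < n" by (auto simp: V_def)
lemma V_Inr[simp]: "Inr k \<in> V \<longleftrightarrow> 1 \<le> k \<and> k \<le> n - 2" by (auto simp: V_def)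

lemma E_LL[simp]: "{Inl a, Inl b} \<notin> E"
  by (auto simp: E_def pend_def spe_def doubleton_eq_iff)
lemma E_LR[simp]: "{Inl a, Inr k} \<in> E \<longleftrightarrow> a < n \<and> k = att a"
  by (auto simp: E_def pend_def spe_def doubleton_eq_iff)
lemma E_RL[simp]: "{Inr k, Inl a} \<in> E \<longleftrightarrow> a < n \<and> k = att a"
  by (simp add: insert_commute)
lemma E_RR: "{Inr k, Inr l} \<in> E \<longleftrightarrow> (l = Suc k \<and> 1 \<le> k \<and> k < n - 2) \<or> (k = Suc l \<and> 1 \<le> l \<and> l < n - 2)"
proof -
  have 1: "{Inr k, Inr l} \<notin> pend ` {0..<n}" by (auto simp: pend_def doubleton_eq_iff)
  have 2: "{Inr k, Inr l} = spe i \<longleftrightarrow> (k = i \<and> l = Suc i) \<or> (k = Suc i \<and> l = i)" for i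
    unfolding spe_def doubleton_eq_iff by simp
  have "{Inr k, Inr l} \<in> spe ` {1..<n-2} \<longleftrightarrow> (\<exists>i\<in>{1..<n-2}. (k = i \<and> l = Suc i) \<or> (k = Suc i \<and> l = i))"
    unfolding image_iff 2 by (rule refl)
  also have "\<dots> \<longleftrightarrow> (l = Suc k \<and> 1 \<le> k \<and> k < n - 2) \<or> (k = Suc l \<and> 1 \<le> l \<and> l < n - 2)"
    by auto
  finally show ?thesis using 1 unfolding E_def by blast
qed

definition canon :: "nat vert \<Rightarrow> nat vert \<Rightarrow> nat vert list" where
  "canon u v = (case u of
      Inr k \<Rightarrow> (case v of Inr l \<Rightarrow> map Inr (sp k l) | Inl b \<Rightarrow> map Inr (sp k (att b)) @ [Inl b])
    | Inl a \<Rightarrow> (case v of Inr l \<Rightarrow> Inl a # map Inr (sp (att a) l)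
              | Inl b \<Rightarrow> (if a = b then [Inl a] else Inl a # map Inr (sp (att a) (att b)) @ [Inl b])))"

lemma canon_RR: "canon (Inr k) (Inr l) = map Inr (sp k l)" by (simp add: canon_def)
lemma canon_RL: "canon (Inr k) (Inl b) = map Inr (sp k (att b)) @ [Inl b]" by (simp add: canon_def)
lemma canon_LR: "canon (Inl a) (Inr l) = Inl a # map Inr (sp (att a) l)" by (simp add: canon_def)
lemma canon_LL: "canon (Inl a) (Inl b) = (if a = b then [Inl a] else Inl a # map Inr (sp (att a) (att b)) @ [Inl b])"
  by (simp add: canon_def)

lemma canon_refl: "canon x x = [x]"
  by (cases x) (auto simp: canon_def)

lemma canon_step:
  assumes e: "{x, z} \<in> E" and nin: "x \<notin> set (canon z y)"
  shows "x # canon z y = canon x y"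
proof (cases x)
  case (Inl a)
  obtain k where z: "z = Inr k" using e Inl by (cases z) auto
  with e Inl have k: "k = att a" by simp
  show ?thesis
  proof (cases y)
    case (Inl b)
    then have "a \<noteq> b" using nin \<open>x = Inl a\<close> z by (auto simp: canon_RL)
    then show ?thesis using Inl \<open>x = Inl a\<close> z k by (simp add: canon_RL canon_LL)
  next
    case (Inr l)
    then show ?thesis using \<open>x = Inl a\<close> z k by (simp add: canon_RR canon_LR)
  qed
next
  case (Inr k)
  show ?thesis
  proof (cases z)
    case (Inl a)
    with e Inr have k: "k = att a" by simp
    show ?thesis
    proof (cases y)
      case (Inl b)
      show ?thesis
      proof (cases "b = a")
        case True
        then show ?thesis using Inl \<open>z = Inl a\<close> \<open>x = Inr k\<close> k by (simp add: canon_LL canon_RL)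
      next
        case False
        then have "x \<in> set (canon z y)" using Inl \<open>z = Inl a\<close> \<open>x = Inr k\<close> k by (simp add: canon_LL)
        then show ?thesis using nin by simp
      qed
    next
      case (Inr l)
      then have "x \<in> set (canon z y)" using \<open>z = Inl a\<close> \<open>x = Inr k\<close> k by (simp add: canon_LR)
      then show ?thesis using nin by simp
    qed
  next
    case (Inr k')
    with e \<open>x = Inr k\<close> have kk: "k' = Suc k \<or> k = Suc k'" by (auto simp: E_RR)
    show ?thesis
    proof (cases y)
      case (Inl b)
      then have "k \<notin> set (sp k' (att b))" using nin \<open>z = Inr k'\<close> \<open>x = Inr k\<close> by (auto simp: canon_RL)
      then have "sp k (att b) = k # sp k' (att b)" by (rule sp_step[OF kk, symmetric])
      then show ?thesis using Inl \<open>z = Inr k'\<close> \<open>x = Inr k\<close> by (simp add: canon_RL)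
    next
      case (Inr l)
      then have "k \<notin> set (sp k' l)" using nin \<open>z = Inr k'\<close> \<open>x = Inr k\<close> by (auto simp: canon_RR)
      then have "sp k l = k # sp k' l" by (rule sp_step[OF kk, symmetric])
      then show ?thesis using Inr \<open>z = Inr k'\<close> \<open>x = Inr k\<close> by (simp add: canon_RR)
    qed
  qed
qed

lemma path_unique: "simple_path E p \<Longrightarrow> p = canon (hd p) (last p)"
proof (induction p)
  case Nil then show ?case by (simp add: simple_path_def)
next
  case (Cons x p)
  show ?case
  proof (cases p)
    case Nil then show ?thesis by (simp add: canon_refl)
  next
    case (Cons y r)
    have sp': "simple_path E p" using Cons.prems Cons by (auto simp: simple_path_pe)
    have IH: "p = canon (hd p) (last p)" by (rule Cons.IH[OF sp'])
    then have IH: "p = canon y (last p)" using Cons by (metis list.sel(1))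
    have e: "{x, y} \<in> E" using Cons.prems Cons by (auto simp: simple_path_pe)
    have "x \<notin> set p" using Cons.prems by (auto simp: simple_path_pe)
    then have "x \<notin> set (canon y (last p))" using IH by simp
    from canon_step[OF e this] have "x # p = canon x (last p)" using IH by simp
    moreover have "last (x # p) = last p" using Cons by simp
    ultimately show ?thesis by (metis list.sel(1))
  qed
qed

lemma hd_canon[simp]: "hd (canon u v) = u"
  by (cases u; cases v) (auto simp: canon_def hd_map)
lemma last_canon[simp]: "last (canon u v) = v"
  by (cases u; cases v) (auto simp: canon_def last_map)
lemma canon_ne[simp]: "canon u v \<noteq> []"
  by (cases u; cases v) (auto simp: canon_def)

lemma set_canon_RR: "set (canon (Inr k) (Inr l)) = Inr ` {min k l..max k l}"
  by (simp add: canon_RR set_sp)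
lemma set_canon_RL: "set (canon (Inr k) (Inl b)) = insert (Inl b) (Inr ` {min k (att b)..max k (att b)})"
  by (auto simp: canon_RL set_sp)
lemma set_canon_LR: "set (canon (Inl a) (Inr l)) = insert (Inl a) (Inr ` {min (att a) l..max (att a) l})"
  by (auto simp: canon_LR set_sp)
lemma set_canon_LL: "a \<noteq> b \<Longrightarrow> set (canon (Inl a) (Inl b)) = insert (Inl a) (insert (Inl b) (Inr ` {min (att a) (att b)..max (att a) (att b)}))"
  by (auto simp: canon_LL set_sp)

lemma pe_canon_RR: "pe (canon (Inr k) (Inr l)) = spe ` {min k l..<max k l}"
  by (simp add: canon_RR pe_sp)
lemma pe_canon_RL: "pe (canon (Inr k) (Inl b)) = insert (pend b) (spe ` {min k (att b)..<max k (att b)})"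
proof -
  have "pe (canon (Inr k) (Inl b)) = insert {last (map Inr (sp k (att b))), Inl b} (pe (map Inr (sp k (att b))))"
    unfolding canon_RL by (rule pe_snoc) simp
  also have "\<dots> = insert (pend b) (spe ` {min k (att b)..<max k (att b)})"
    by (simp add: pe_sp last_map pend_def insert_commute)
  finally show ?thesis .
qed
lemma pe_canon_LR: "pe (canon (Inl a) (Inr l)) = insert (pend a) (spe ` {min (att a) l..<max (att a) l})"
proof -
  have "pe (canon (Inl a) (Inr l)) = insert {Inl a, hd (map Inr (sp (att a) l))} (pe (map Inr (sp (att a) l)))"
    unfolding canon_LR by (rule pe_Cons_ne) simp
  also have "\<dots> = insert (pend a) (spe ` {min (att a) l..<max (att a) l})"
    by (simp add: pe_sp hd_map pend_def)
  finally show ?thesis .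
qed
lemma pe_canon_LL: "a \<noteq> b \<Longrightarrow> pe (canon (Inl a) (Inl b)) = insert (pend a) (insert (pend b) (spe ` {min (att a) (att b)..<max (att a) (att b)}))"
proof -
  assume ab: "a \<noteq> b"
  let ?xs = "map Inr (sp (att a) (att b)) :: nat vert list"
  have "pe (canon (Inl a) (Inl b)) = pe (Inl a # (?xs @ [Inl b]))" using ab by (simp add: canon_LL)
  also have "\<dots> = insert {Inl a, hd (?xs @ [Inl b])} (pe (?xs @ [Inl b]))"
    by (rule pe_Cons_ne) simp
  also have "pe (?xs @ [Inl b]) = insert {last ?xs, Inl b} (pe ?xs)"
    by (rule pe_snoc) simp
  finally show ?thesis
    by (simp add: pe_sp hd_map last_map pend_def insert_commute)
qed

lemma distinct_canon: "distinct (canon u v)"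
  by (cases u; cases v) (auto simp: canon_def distinct_map)

lemma spe_mem: "1 \<le> i \<Longrightarrow> i < n - 2 \<Longrightarrow> spe i \<in> E"
  by (auto simp: E_def)
lemma spe_in_E: "1 \<le> k \<Longrightarrow> 1 \<le> l \<Longrightarrow> k \<le> n - 2 \<Longrightarrow> l \<le> n - 2 \<Longrightarrow> spe ` {min k l..<max k l} \<subseteq> E"
  by (auto intro!: spe_mem)

lemma pend_in_E: "a < n \<Longrightarrow> pend a \<in> E" by (auto simp: E_def)

lemma pe_canon_E: "u \<in> V \<Longrightarrow> v \<in> V \<Longrightarrow> pe (canon u v) \<subseteq> E"
proof (cases u; cases v)
  fix a b assume "u \<in> V" "v \<in> V" "u = Inl a" "v = Inl b"
  then show ?thesis using att_range[of a] att_range[of b]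
    using spe_in_E[of "att a" "att b"] by (cases "a = b") (auto simp: canon_refl pe_canon_LL pend_in_E)
next
  fix a l assume "u \<in> V" "v \<in> V" "u = Inl a" "v = Inr l"
  then show ?thesis using att_range[of a]
    using spe_in_E[of "att a" l] by (auto simp: pe_canon_LR pend_in_E)
next
  fix k b assume "u \<in> V" "v \<in> V" "u = Inr k" "v = Inl b"
  then show ?thesis using att_range[of b]
    using spe_in_E[of k "att b"] by (auto simp: pe_canon_RL pend_in_E)
next
  fix k l assume "u \<in> V" "v \<in> V" "u = Inr k" "v = Inr l"
  then show ?thesis
    using spe_in_E[of k l] by (auto simp: pe_canon_RR)
qed

lemma canon_simple: "u \<in> V \<Longrightarrow> v \<in> V \<Longrightarrow> simple_path E (canon u v)"
  by (simp add: simple_path_pe distinct_canon pe_canon_E)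

end

context cat begin

lemma Inr_pend[simp]: "Inr k \<in> pend x \<longleftrightarrow> k = att x" by (auto simp: pend_def)
lemma Inl_pend[simp]: "Inl y \<in> pend x \<longleftrightarrow> y = x" by (auto simp: pend_def)
lemma Inr_spe[simp]: "(Inr k :: nat vert) \<in> spe j \<longleftrightarrow> k = j \<or> k = Suc j" by (auto simp: spe_def)
lemma Inl_spe[simp]: "(Inl y :: nat vert) \<notin> spe j" by (auto simp: spe_def)

lemma pend_inj: "inj pend"
  by (rule injI) (auto simp: pend_def doubleton_eq_iff)
lemma spe_inj: "inj (spe :: nat \<Rightarrow> nat vert set)"
  by (rule injI) (auto simp: spe_def doubleton_eq_iff)
lemma pend_ne_spe: "pend x \<noteq> spe k"
  by (auto simp: pend_def spe_def doubleton_eq_iff)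

lemma card_V: "card V = n + (n - 2)"
proof -
  have "card V = card (Inl ` {0..<n} :: nat vert set) + card (Inr ` {1..n-2} :: nat vert set)"
    unfolding V_def by (rule card_Un_disjoint) auto
  also have "\<dots> = n + (n - 2)" by (simp add: card_image)
  finally show ?thesis .
qed

lemma card_E: "card E = n + (n - 3)"
proof -
  have "card E = card (pend ` {0..<n}) + card (spe ` {1..<n-2} :: nat vert set set)"
    unfolding E_def by (rule card_Un_disjoint) (auto simp: pend_ne_spe)
  also have "\<dots> = n + (n - 3)"
    using pend_inj spe_inj by (simp add: card_image inj_on_subset)
  finally show ?thesis .
qed

lemma E_sub: "E \<subseteq> {{u, v} |u v. u \<in> V \<and> v \<in> V \<and> u \<noteq> v}"
proof
  fix e assume "e \<in> E"
  then consider (p) x where "x < n" "e = pend x" | (s) k where "1 \<le> k" "k < n - 2" "e = spe k"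
    unfolding E_def by auto
  then show "e \<in> {{u, v} |u v. u \<in> V \<and> v \<in> V \<and> u \<noteq> v}"
  proof cases
    case p then show ?thesis using att_range[of x] unfolding pend_def
      by (intro CollectI exI[of _ "Inl x"] exI[of _ "Inr (att x)"]) auto
  next
    case s then show ?thesis unfolding spe_def by (intro CollectI exI[of _ "Inr k"] exI[of _ "Inr (Suc k)"]) auto
  qed
qed

lemma deg_Inl: "x < n \<Longrightarrow> deg E (Inl x) = 1"
proof -
  assume x: "x < n"
  have "{e \<in> E. Inl x \<in> e} = {pend x}"
    using x unfolding E_def by auto
  then show ?thesis by (simp add: deg_def)
qed

lemma card_att: "card {x \<in> {0..<n}. att x = k} = card {i \<in> {0..<n}. cc i = k}"
proof -
  have "inj_on \<rho> {x \<in> {0..<n}. att x = k}"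
    by (rule inj_onI) (metis mem_Collect_eq atLeastLessThan_iff rs)
  moreover have "\<rho> ` {x \<in> {0..<n}. att x = k} = {i \<in> {0..<n}. cc i = k}"
  proof
    show "\<rho> ` {x \<in> {0..<n}. att x = k} \<subseteq> {i \<in> {0..<n}. cc i = k}"
      using rs by (auto simp: att_def)
    show "{i \<in> {0..<n}. cc i = k} \<subseteq> \<rho> ` {x \<in> {0..<n}. att x = k}"
    proof
      fix i assume "i \<in> {i \<in> {0..<n}. cc i = k}"
      then have "\<sigma> i \<in> {x \<in> {0..<n}. att x = k}" "i = \<rho> (\<sigma> i)" using sr by (auto simp: att_def)
      then show "i \<in> \<rho> ` {x \<in> {0..<n}. att x = k}" by blast
    qed
  qed
  ultimately show ?thesis by (metis card_image)
qed

lemma deg_Inr: assumes k: "1 \<le> k" "k \<le> n - 2" shows "deg E (Inr k) = 3"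
proof -
  have eq: "{e \<in> E. Inr k \<in> e} = pend ` {x \<in> {0..<n}. att x = k} \<union> spe ` {j \<in> {1..<n-2}. j = k \<or> Suc j = k}"
    unfolding E_def by auto
  have "deg E (Inr k) = card (pend ` {x \<in> {0..<n}. att x = k}) + card (spe ` {j \<in> {1..<n-2}. j = k \<or> Suc j = k} :: nat vert set set)"
    unfolding deg_def eq by (rule card_Un_disjoint) (auto simp: pend_ne_spe)
  also have "\<dots> = card {i \<in> {0..<n}. cc i = k} + card {j \<in> {1..<n-2}. j = k \<or> Suc j = k}"
    using pend_inj spe_inj card_att by (simp add: card_image inj_on_subset)
  also have "\<dots> = 3"
  proof -
    have cce: "i < n \<Longrightarrow> cc i = k \<longleftrightarrow> (k = 1 \<and> i \<le> 1) \<or> (k = n - 2 \<and> n - 2 \<le> i) \<or> (1 < k \<and> k < n - 2 \<and> i = k)" for i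
      using k n4 unfolding cc_def by (cases "i = 0"; cases "n - 1 \<le> i") auto
    consider "k = 1" | "k = n - 2" | "1 < k" "k < n - 2" using k by linarith
    then show ?thesis
    proof cases
      case 1
      have a: "{i \<in> {0..<n}. cc i = k} = {0, 1}" using 1 n4 cce by auto
      have b: "{j \<in> {1..<n-2}. j = k \<or> Suc j = k} = {1}" using 1 n4 by auto
      show ?thesis unfolding a b by simp
    next
      case 2
      have a: "{i \<in> {0..<n}. cc i = k} = {n - 2, n - 1}" using 2 n4 cce by auto
      have b: "{j \<in> {1..<n-2}. j = k \<or> Suc j = k} = {n - 3}" using 2 n4 by auto
      show ?thesis unfolding a b using n4 by simp
    next
      case 3
      have a: "{i \<in> {0..<n}. cc i = k} = {k}" using 3 n4 cce by auto
      have b: "{j \<in> {1..<n-2}. j = k \<or> Suc j = k} = {k - 1, k}" using 3 n4 by auto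
      show ?thesis unfolding a b using 3 by simp
    qed
  qed
  finally show ?thesis .
qed

lemma phylo: "phylo_tree {0..<n} T"
  unfolding phylo_tree_def is_tree_def T_def fst_conv snd_conv
proof (intro conjI)
  show "finite V" by (simp add: V_def)
  show "V \<noteq> {}" using n4 by (auto simp: V_def)
  show "E \<subseteq> {{u, v} |u v. u \<in> V \<and> v \<in> V \<and> u \<noteq> v}" by (rule E_sub)
  show "connected_graph (V, E)"
    unfolding connected_graph_def fst_conv snd_conv
    using canon_simple by (metis hd_canon last_canon)
  show "card E + 1 = card V" using n4 by (simp add: card_E card_V)
  show "finite {0..<n}" by simp
  show "V \<inter> range Inl = Inl ` {0..<n}" by (auto simp: V_def)
  show "\<forall>x\<in>{0..<n}. deg E (Inl x) = 1" using deg_Inl by simp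
  show "\<forall>v\<in>V - Inl ` {0..<n}. deg E v = 3" using deg_Inr by (auto simp: V_def)
qed

end

lemma card4_distinct:
  assumes "card {a, b, c, d} = (4::nat)"
  shows "a \<noteq> b \<and> a \<noteq> c \<and> a \<noteq> d \<and> b \<noteq> c \<and> b \<noteq> d \<and> c \<noteq> d"
  using assms by (auto simp: card_insert_if split: if_splits)

lemma restrict_edge_sub: "e \<in> snd (restrict_tree T Y) \<Longrightarrow> e \<subseteq> fst (restrict_tree T Y)"
  unfolding restrict_tree_def Let_def by auto

lemma iso_transfer:
  assumes "tree_iso R1 R2" "{v, Inl x} \<in> snd R1" "{v, Inl y} \<in> snd R1"
    "v \<in> fst R1" "Inl x \<in> fst R1" "Inl y \<in> fst R1"
  shows "\<exists>w. {w, Inl x} \<in> snd R2 \<and> {w, Inl y} \<in> snd R2"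
proof -
  obtain f where f: "bij_betw f (fst R1) (fst R2)"
    "\<forall>u\<in>fst R1. \<forall>v\<in>fst R1. {u, v} \<in> snd R1 \<longleftrightarrow> {f u, f v} \<in> snd R2"
    "\<forall>x. Inl x \<in> fst R1 \<longrightarrow> f (Inl x) = Inl x"
    using assms(1) unfolding tree_iso_def by blast
  have "{f v, f (Inl x)} \<in> snd R2" using f(2) assms by blast
  moreover have "{f v, f (Inl y)} \<in> snd R2" using f(2) assms by blast
  ultimately show ?thesis using f(3) assms by auto
qed

lemma iso_quartet_cherry:
  assumes "tree_iso R (quartet_tree a b c d)" "Inl a \<in> fst R" "Inl b \<in> fst R"
  shows "\<exists>v. {v, Inl a} \<in> snd R \<and> {v, Inl b} \<in> snd R"
proof -
  obtain f where f: "bij_betw f (fst R) (fst (quartet_tree a b c d))"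
    "\<forall>u\<in>fst R. \<forall>v\<in>fst R. {u, v} \<in> snd R \<longleftrightarrow> {f u, f v} \<in> snd (quartet_tree a b c d)"
    "\<forall>x. Inl x \<in> fst R \<longrightarrow> f (Inl x) = Inl x"
    using assms(1) unfolding tree_iso_def by blast
  have "Inr 0 \<in> fst (quartet_tree a b c d)" by (simp add: quartet_tree_def)
  then obtain v where v: "v \<in> fst R" "f v = Inr 0" using f(1) by (metis bij_betw_iff_bijections)
  have "{f v, f (Inl a)} \<in> snd (quartet_tree a b c d)" using v f(3) assms by (simp add: quartet_tree_def insert_commute)
  then have 1: "{v, Inl a} \<in> snd R" using f(2) v assms by blast
  have "{f v, f (Inl b)} \<in> snd (quartet_tree a b c d)" using v f(3) assms by (simp add: quartet_tree_def insert_commute)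
  then have 2: "{v, Inl b} \<in> snd R" using f(2) v assms by blast
  from 1 2 show ?thesis by blast
qed

lemma iso_quartet_cherry2:
  assumes "tree_iso R (quartet_tree a b c d)" "Inl c \<in> fst R" "Inl d \<in> fst R"
  shows "\<exists>v. {v, Inl c} \<in> snd R \<and> {v, Inl d} \<in> snd R"
proof -
  obtain f where f: "bij_betw f (fst R) (fst (quartet_tree a b c d))"
    "\<forall>u\<in>fst R. \<forall>v\<in>fst R. {u, v} \<in> snd R \<longleftrightarrow> {f u, f v} \<in> snd (quartet_tree a b c d)"
    "\<forall>x. Inl x \<in> fst R \<longrightarrow> f (Inl x) = Inl x"
    using assms(1) unfolding tree_iso_def by blast
  have "Inr 1 \<in> fst (quartet_tree a b c d)" by (simp add: quartet_tree_def)
  then obtain v where v: "v \<in> fst R" "f v = Inr 1" using f(1) by (metis bij_betw_iff_bijections)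
  have "{f v, f (Inl c)} \<in> snd (quartet_tree a b c d)" using v f(3) assms by (simp add: quartet_tree_def insert_commute)
  then have 1: "{v, Inl c} \<in> snd R" using f(2) v assms by blast
  have "{f v, f (Inl d)} \<in> snd (quartet_tree a b c d)" using v f(3) assms by (simp add: quartet_tree_def insert_commute)
  then have 2: "{v, Inl d} \<in> snd R" using f(2) v assms by blast
  from 1 2 show ?thesis by blast
qed

context cat begin

lemma span_gen:
  assumes Y: "Y \<subseteq> {0..<n}"
  shows "span_edges T Y = \<Union> {pe (canon (Inl u) (Inl v)) | u v. u \<in> Y \<and> v \<in> Y}"
proof
  show "span_edges T Y \<subseteq> \<Union> {pe (canon (Inl u) (Inl v)) | u v. u \<in> Y \<and> v \<in> Y}"
  proof
    fix e assume "e \<in> span_edges T Y"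
    then obtain p where p: "simple_path E p" "hd p \<in> Inl ` Y" "last p \<in> Inl ` Y" "e \<in> path_edges p"
      unfolding span_edges_def T_def by auto
    then obtain u v where uv: "u \<in> Y" "v \<in> Y" "hd p = Inl u" "last p = Inl v" by blast
    have "p = canon (Inl u) (Inl v)" using path_unique[OF p(1)] uv by simp
    then show "e \<in> \<Union> {pe (canon (Inl u) (Inl v)) | u v. u \<in> Y \<and> v \<in> Y}"
      using p(4) uv by (auto simp: path_edges_pe)
  qed
next
  show "\<Union> {pe (canon (Inl u) (Inl v)) | u v. u \<in> Y \<and> v \<in> Y} \<subseteq> span_edges T Y"
  proof
    fix e assume "e \<in> \<Union> {pe (canon (Inl u) (Inl v)) | u v. u \<in> Y \<and> v \<in> Y}"
    then obtain u v where uv: "u \<in> Y" "v \<in> Y" "e \<in> pe (canon (Inl u) (Inl v))" by blast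
    have "simple_path E (canon (Inl u) (Inl v))" using Y uv by (intro canon_simple) auto
    then show "e \<in> span_edges T Y"
      unfolding span_edges_def T_def snd_conv using uv
      by (intro UnionI[of "path_edges (canon (Inl u) (Inl v))"]) (auto simp: path_edges_pe)
  qed
qed

lemma span_pair:
  assumes "a < n" "b < n" "a \<noteq> b"
  shows "span_edges T {a, b} = insert (pend a) (insert (pend b) (spe ` {min (att a) (att b)..<max (att a) (att b)}))"
proof -
  have "span_edges T {a, b} = \<Union> {pe (canon (Inl u) (Inl v)) | u v. u \<in> {a, b} \<and> v \<in> {a, b}}"
    using assms by (intro span_gen) auto
  also have "{pe (canon (Inl u) (Inl v)) | u v. u \<in> {a, b} \<and> v \<in> {a, b}} =
     {pe (canon (Inl a) (Inl a)), pe (canon (Inl a) (Inl b)), pe (canon (Inl b) (Inl a)), pe (canon (Inl b) (Inl b))}"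
    by auto
  also have "\<Union> \<dots> = pe (canon (Inl a) (Inl b)) \<union> pe (canon (Inl b) (Inl a))"
    by (simp add: canon_refl)
  also have "pe (canon (Inl b) (Inl a)) = pe (canon (Inl a) (Inl b))"
  proof -
    have m: "min (att b) (att a) = min (att a) (att b)" "max (att b) (att a) = max (att a) (att b)"
      by (rule min.commute, rule max.commute)
    show ?thesis using assms unfolding pe_canon_LL[OF assms(3)] pe_canon_LL[OF assms(3)[symmetric]] m
      by (simp only: insert_commute)
  qed
  finally show ?thesis using assms by (simp add: pe_canon_LL)
qed

lemma att_le: "x < n \<Longrightarrow> y < n \<Longrightarrow> \<rho> x \<le> \<rho> y \<Longrightarrow> att x \<le> att y"
proof -
  assume h: "x < n" "y < n" "\<rho> x \<le> \<rho> y"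
  have "\<rho> x < n" "\<rho> y < n" using rs[OF h(1)] rs[OF h(2)] by auto
  then show ?thesis using h(3) n4 unfolding att_def cc_def by (auto split: if_split)
qed

definition sorted4 :: "nat \<Rightarrow> nat \<Rightarrow> nat \<Rightarrow> nat \<Rightarrow> bool" where
  "sorted4 a b c d \<longleftrightarrow> a < n \<and> b < n \<and> c < n \<and> d < n \<and> \<rho> a < \<rho> b \<and> \<rho> b < \<rho> c \<and> \<rho> c < \<rho> d"

definition W5 :: "nat \<Rightarrow> nat \<Rightarrow> nat \<Rightarrow> nat \<Rightarrow> nat vert set" where
  "W5 a b c d = {Inl a, Inl b, Inl c, Inl d, Inr (att b), Inr (att c)}"
definition RE5 :: "nat \<Rightarrow> nat \<Rightarrow> nat \<Rightarrow> nat \<Rightarrow> nat vert set set" where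
  "RE5 a b c d = {{Inl a, Inr (att b)}, {Inl b, Inr (att b)}, {Inl c, Inr (att c)}, {Inl d, Inr (att c)},
     {Inr (att b), Inr (att c)}}"

end

locale cat4 = cat +
  fixes a b c d :: nat
  assumes s4: "sorted4 a b c d"
begin

lemma lt: "a < n" "b < n" "c < n" "d < n" using s4 by (auto simp: sorted4_def)
lemma ord: "\<rho> a < \<rho> b" "\<rho> b < \<rho> c" "\<rho> c < \<rho> d" using s4 by (auto simp: sorted4_def)
lemma dist: "a \<noteq> b" "a \<noteq> c" "a \<noteq> d" "b \<noteq> c" "b \<noteq> d" "c \<noteq> d" using ord by auto

lemma attab: "att a \<le> att b" using att_le lt ord by simp
lemma attcd: "att c \<le> att d" using att_le lt ord by simp
lemma attbc: "att b < att c"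
proof -
  have "\<rho> c < n" "\<rho> d < n" using rs[OF lt(3)] rs[OF lt(4)] by auto
  then show ?thesis using ord n4 unfolding att_def cc_def by (auto split: if_split)
qed

abbreviation "Q \<equiv> {a, b, c, d}"

lemma Q_sub: "Q \<subseteq> {0..<n}" using lt by auto

lemma att_Q: "x \<in> Q \<Longrightarrow> att a \<le> att x \<and> att x \<le> att d"
  using attab attbc attcd by auto

lemma span_Q: "span_edges T Q = {pend a, pend b, pend c, pend d} \<union> spe ` {att a..<att d}"
proof
  show "span_edges T Q \<subseteq> {pend a, pend b, pend c, pend d} \<union> spe ` {att a..<att d}"
  proof
    fix e assume "e \<in> span_edges T Q"
    then obtain u v where uv: "u \<in> Q" "v \<in> Q" "e \<in> pe (canon (Inl u) (Inl v))"
      unfolding span_gen[OF Q_sub] by blast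
    have "u \<noteq> v" using uv by (auto simp: canon_refl)
    then have e: "e \<in> insert (pend u) (insert (pend v) (spe ` {min (att u) (att v)..<max (att u) (att v)}))"
      using uv pe_canon_LL by auto
    have "spe ` {min (att u) (att v)..<max (att u) (att v)} \<subseteq> (spe ` {att a..<att d} :: nat vert set set)"
      using att_Q[OF uv(1)] att_Q[OF uv(2)] by (intro image_mono) auto
    then show "e \<in> {pend a, pend b, pend c, pend d} \<union> spe ` {att a..<att d}"
      using e uv(1,2) by blast
  qed
next
  have sub: "pe (canon (Inl u) (Inl v)) \<subseteq> span_edges T Q" if "u \<in> Q" "v \<in> Q" for u v
    unfolding span_gen[OF Q_sub] using that by blast
  have 1: "pe (canon (Inl a) (Inl d)) = insert (pend a) (insert (pend d) (spe ` {att a..<att d}))"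
    using pe_canon_LL[of a d] dist attab attbc attcd by (simp add: min_def max_def)
  have 2: "pend b \<in> pe (canon (Inl b) (Inl a))" "pend c \<in> pe (canon (Inl c) (Inl a))"
    using pe_canon_LL dist by auto
  show "{pend a, pend b, pend c, pend d} \<union> spe ` {att a..<att d} \<subseteq> span_edges T Q"
    using sub[of a d] sub[of b a] sub[of c a] 1 2 by auto
qed

lemma verts_Q: "fst (span_tree T Q) = Inl ` Q \<union> Inr ` {att a..att d}"
proof -
  have lt_ad: "att a < att d" using attab attbc attcd by simp
  have "\<Union> (span_edges T Q) = Inl ` Q \<union> Inr ` {att a..att d}"
  proof (rule set_eqI)
    fix v :: "nat vert"
    show "v \<in> \<Union> (span_edges T Q) \<longleftrightarrow> v \<in> Inl ` Q \<union> Inr ` {att a..att d}"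
    proof (cases v)
      case (Inl x)
      then show ?thesis unfolding span_Q by auto
    next
      case (Inr k)
      have "Inr k \<in> \<Union> (span_edges T Q) \<longleftrightarrow> (k \<in> att ` Q \<or> (\<exists>j\<in>{att a..<att d}. k = j \<or> k = Suc j))"
        unfolding span_Q by auto
      also have "\<dots> \<longleftrightarrow> k \<in> {att a..att d}"
      proof
        assume "k \<in> att ` Q \<or> (\<exists>j\<in>{att a..<att d}. k = j \<or> k = Suc j)"
        then show "k \<in> {att a..att d}" using att_Q by auto
      next
        assume k: "k \<in> {att a..att d}"
        show "k \<in> att ` Q \<or> (\<exists>j\<in>{att a..<att d}. k = j \<or> k = Suc j)"
        proof (cases "k < att d")
          case True then show ?thesis using k by auto
        next
          case False then have "k = att d" using k by auto
          then show ?thesis by auto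
        qed
      qed
      finally show ?thesis using Inr by auto
    qed
  qed
  then show ?thesis unfolding span_tree_def by auto
qed


lemma SPE_sub: "span_edges T Q \<subseteq> E"
  unfolding span_Q using lt att_range[of a] att_range[of d]
  by (auto simp: pend_in_E intro!: spe_mem)

lemma card_filter4: "card {x \<in> Q. P x} = (if P a then 1 else 0) + (if P b then 1 else 0) + (if P c then 1 else 0) + (if P d then 1 else 0)"
proof -
  have "card {x \<in> Q. P x} = (\<Sum>x\<in>Q. if P x then 1 else 0)"
    by (simp add: sum.If_cases Int_def)
  also have "\<dots> = (if P a then 1 else 0) + (if P b then 1 else 0) + (if P c then 1 else 0) + (if P d then 1 else 0)"
    using dist by simp
  finally show ?thesis .
qed

lemma deg_span_Inl: "x \<in> Q \<Longrightarrow> deg (span_edges T Q) (Inl x) = 1"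
proof -
  assume x: "x \<in> Q"
  have "{e \<in> span_edges T Q. Inl x \<in> e} = {pend x}"
    unfolding span_Q using x by auto
  then show ?thesis by (simp add: deg_def)
qed

lemma deg_span_Inr:
  assumes k: "att a \<le> k" "k \<le> att d"
  shows "deg (span_edges T Q) (Inr k) = (if att a = k then 1 else 0) + (if att b = k then 1 else 0)
     + (if att c = k then 1 else 0) + (if att d = k then 1 else 0) + (if att a < k then 1 else 0) + (if k < att d then 1 else 0)"
proof -
  have eq: "{e \<in> span_edges T Q. Inr k \<in> e} = pend ` {x \<in> Q. att x = k} \<union> spe ` {j \<in> {att a..<att d}. j = k \<or> Suc j = k}"
    unfolding span_Q by auto
  have "deg (span_edges T Q) (Inr k) = card (pend ` {x \<in> Q. att x = k}) + card (spe ` {j \<in> {att a..<att d}. j = k \<or> Suc j = k} :: nat vert set set)"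
    unfolding deg_def eq by (rule card_Un_disjoint) (auto simp: pend_ne_spe)
  also have "\<dots> = card {x \<in> Q. att x = k} + card {j \<in> {att a..<att d}. j = k \<or> Suc j = k}"
    using pend_inj spe_inj by (simp add: card_image inj_on_subset)
  also have "card {j \<in> {att a..<att d}. j = k \<or> Suc j = k} = (if att a < k then 1 else 0) + (if k < att d then 1 else 0)"
  proof -
    have lt_ad: "att a < att d" using attab attbc attcd by simp
    consider "att a < k" "k < att d" | "att a = k" | "k = att d" "att a < k" using k lt_ad by linarith
    then show ?thesis
    proof cases
      case 1
      then have "{j \<in> {att a..<att d}. j = k \<or> Suc j = k} = {k - 1, k}" by auto
      then show ?thesis using 1 by simp
    next
      case 2
      then have "{j \<in> {att a..<att d}. j = k \<or> Suc j = k} = {k}" using lt_ad by auto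
      then show ?thesis using 2 lt_ad by simp
    next
      case 3
      then have "{j \<in> {att a..<att d}. j = k \<or> Suc j = k} = {k - 1}" by auto
      then show ?thesis using 3 by simp
    qed
  qed
  finally have X: "deg (span_edges T Q) (Inr k) = card {x \<in> Q. att x = k} + ((if att a < k then 1 else 0) + (if k < att d then 1 else 0))" .
  show ?thesis using X unfolding card_filter4 by simp
qed

lemma W_eq: "{v \<in> fst (span_tree T Q). deg (snd (span_tree T Q)) v \<noteq> 2} = W5 a b c d"
proof (rule set_eqI)
  fix v :: "nat vert"
  have snd_eq: "snd (span_tree T Q) = span_edges T Q" by (simp add: span_tree_def)
  show "v \<in> {v \<in> fst (span_tree T Q). deg (snd (span_tree T Q)) v \<noteq> 2} \<longleftrightarrow> v \<in> W5 a b c d"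
  proof (cases v)
    case (Inl x)
    then show ?thesis unfolding verts_Q snd_eq W5_def using deg_span_Inl by auto
  next
    case (Inr k)
    have "v \<in> {v \<in> fst (span_tree T Q). deg (snd (span_tree T Q)) v \<noteq> 2} \<longleftrightarrow>
        att a \<le> k \<and> k \<le> att d \<and> deg (span_edges T Q) (Inr k) \<noteq> 2"
      unfolding verts_Q snd_eq Inr by auto
    also have "\<dots> \<longleftrightarrow> k = att b \<or> k = att c"
    proof
      assume h: "att a \<le> k \<and> k \<le> att d \<and> deg (span_edges T Q) (Inr k) \<noteq> 2"
      then show "k = att b \<or> k = att c"
        using deg_span_Inr[of k] attab attbc attcd by (auto split: if_splits)
    next
      assume h: "k = att b \<or> k = att c"
      then have r: "att a \<le> k \<and> k \<le> att d" using attab attbc attcd by auto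
      then show "att a \<le> k \<and> k \<le> att d \<and> deg (span_edges T Q) (Inr k) \<noteq> 2"
        using h deg_span_Inr[of k] attab attbc attcd by (auto split: if_splits)
    qed
    also have "\<dots> \<longleftrightarrow> v \<in> W5 a b c d" unfolding W5_def Inr by auto
    finally show ?thesis .
  qed
qed

lemma W_eq2: "{v \<in> fst (span_tree T Q). deg (span_edges T Q) v \<noteq> 2} = W5 a b c d"
  using W_eq by (simp add: span_tree_def)

lemma W5_V: "W5 a b c d \<subseteq> V"
  unfolding W5_def using lt att_range[of b] att_range[of c] by auto

lemma Inr_W5: "Inr k \<in> W5 a b c d \<longleftrightarrow> k = att b \<or> k = att c" by (auto simp: W5_def)
lemma Inl_W5: "Inl x \<in> W5 a b c d \<longleftrightarrow> x \<in> Q" by (auto simp: W5_def)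

lemma classify:
  assumes u: "u \<in> W5 a b c d" and w: "w \<in> W5 a b c d" and uw: "u \<noteq> w"
    and noW: "\<forall>v\<in>set (canon u w). v \<noteq> u \<longrightarrow> v \<noteq> w \<longrightarrow> v \<notin> W5 a b c d"
  shows "{u, w} \<in> RE5 a b c d"
proof -
  have B: "Inr (att b) \<in> W5 a b c d" and C: "Inr (att c) \<in> W5 a b c d" by (auto simp: W5_def)
  have BC: "att b < att c" "att a \<le> att b" "att c \<le> att d" using attab attbc attcd by auto
  show ?thesis
  proof (cases u)
    case (Inl x)
    then have x: "x \<in> Q" using u by (simp add: Inl_W5)
    show ?thesis
    proof (cases w)
      case (Inl y)
      then have y: "y \<in> Q" using w by (simp add: Inl_W5)
      have xy: "x \<noteq> y" using uw \<open>u = Inl x\<close> \<open>w = Inl y\<close> by simp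
      have "att b \<in> {min (att x) (att y)..max (att x) (att y)} \<or> att c \<in> {min (att x) (att y)..max (att x) (att y)}"
        using x y xy BC by auto
      then have "Inr (att b) \<in> set (canon u w) \<or> Inr (att c) \<in> set (canon u w)"
        using \<open>u = Inl x\<close> \<open>w = Inl y\<close> set_canon_LL[OF xy] by auto
      then show ?thesis using noW B C \<open>u = Inl x\<close> \<open>w = Inl y\<close> by auto
    next
      case (Inr k)
      then have k: "k = att b \<or> k = att c" using w by (simp add: Inr_W5)
      have sc: "set (canon u w) = insert (Inl x) (Inr ` {min (att x) k..max (att x) k})"
        using \<open>u = Inl x\<close> \<open>w = Inr k\<close> set_canon_LR by simp
      consider "x = a \<or> x = b" "k = att b" | "x = c \<or> x = d" "k = att c"
        | "x = a \<or> x = b" "k = att c" | "x = c \<or> x = d" "k = att b" using x k by auto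
      then show ?thesis
      proof cases
        case 1 then show ?thesis using \<open>u = Inl x\<close> \<open>w = Inr k\<close> by (auto simp: RE5_def)
      next
        case 2 then show ?thesis using \<open>u = Inl x\<close> \<open>w = Inr k\<close> by (auto simp: RE5_def)
      next
        case 3
        then have "Inr (att b) \<in> set (canon u w)" using sc BC by auto
        then show ?thesis using noW B 3 BC \<open>u = Inl x\<close> \<open>w = Inr k\<close> by auto
      next
        case 4
        then have "Inr (att c) \<in> set (canon u w)" using sc BC by auto
        then show ?thesis using noW C 4 BC \<open>u = Inl x\<close> \<open>w = Inr k\<close> by auto
      qed
    qed
  next
    case (Inr k)
    then have k: "k = att b \<or> k = att c" using u by (simp add: Inr_W5)
    show ?thesis
    proof (cases w)
      case (Inl x)
      then have x: "x \<in> Q" using w by (simp add: Inl_W5)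
      have sc: "set (canon u w) = insert (Inl x) (Inr ` {min k (att x)..max k (att x)})"
        using \<open>u = Inr k\<close> \<open>w = Inl x\<close> set_canon_RL by simp
      consider "x = a \<or> x = b" "k = att b" | "x = c \<or> x = d" "k = att c"
        | "x = a \<or> x = b" "k = att c" | "x = c \<or> x = d" "k = att b" using x k by auto
      then show ?thesis
      proof cases
        case 1 then show ?thesis using \<open>u = Inr k\<close> \<open>w = Inl x\<close> by (auto simp: RE5_def insert_commute)
      next
        case 2 then show ?thesis using \<open>u = Inr k\<close> \<open>w = Inl x\<close> by (auto simp: RE5_def insert_commute)
      next
        case 3
        then have "Inr (att b) \<in> set (canon u w)" using sc BC by auto
        then show ?thesis using noW B 3 BC \<open>u = Inr k\<close> \<open>w = Inl x\<close> by auto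
      next
        case 4
        then have "Inr (att c) \<in> set (canon u w)" using sc BC by auto
        then show ?thesis using noW C 4 BC \<open>u = Inr k\<close> \<open>w = Inl x\<close> by auto
      qed
    next
      case (Inr l)
      then have l: "l = att b \<or> l = att c" using w by (simp add: Inr_W5)
      have "k \<noteq> l" using uw \<open>u = Inr k\<close> \<open>w = Inr l\<close> by simp
      then show ?thesis using k l \<open>u = Inr k\<close> \<open>w = Inr l\<close> by (auto simp: RE5_def insert_commute)
    qed
  qed
qed

lemma good_edge:
  assumes "e \<in> RE5 a b c d"
  shows "\<exists>u w. e = {u, w} \<and> u \<in> W5 a b c d \<and> w \<in> W5 a b c d \<and> u \<noteq> w \<and>
     pe (canon u w) \<subseteq> span_edges T Q \<and> (\<forall>v\<in>set (canon u w). v \<noteq> u \<longrightarrow> v \<noteq> w \<longrightarrow> v \<notin> W5 a b c d)"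
proof -
  have BC: "att b < att c" "att a \<le> att b" "att c \<le> att d" using attab attbc attcd by auto
  have spe_sub: "spe ` {i..<j} \<subseteq> span_edges T Q" if "att a \<le> i" "j \<le> att d" for i j
    unfolding span_Q using that by auto
  have pend_sub: "pend x \<in> span_edges T Q" if "x \<in> Q" for x
    unfolding span_Q using that by auto
  consider "e = {Inl a, Inr (att b)}" | "e = {Inl b, Inr (att b)}" | "e = {Inl c, Inr (att c)}"
    | "e = {Inl d, Inr (att c)}" | "e = {Inr (att b), Inr (att c)}" using assms by (auto simp: RE5_def)
  then show ?thesis
  proof cases
    case 1
    have "pe (canon (Inl a) (Inr (att b))) \<subseteq> span_edges T Q"
      using BC pe_canon_LR spe_sub[of "att a" "att b"] pend_sub[of a] by auto
    moreover have "\<forall>v\<in>set (canon (Inl a) (Inr (att b))). v \<noteq> Inl a \<longrightarrow> v \<noteq> Inr (att b) \<longrightarrow> v \<notin> W5 a b c d"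
      using BC by (auto simp: set_canon_LR Inr_W5)
    ultimately show ?thesis using 1 by (intro exI[of _ "Inl a"] exI[of _ "Inr (att b)"]) (auto simp: W5_def)
  next
    case 2
    have "pe (canon (Inl b) (Inr (att b))) \<subseteq> span_edges T Q"
      using BC pe_canon_LR pend_sub[of b] by auto
    moreover have "\<forall>v\<in>set (canon (Inl b) (Inr (att b))). v \<noteq> Inl b \<longrightarrow> v \<noteq> Inr (att b) \<longrightarrow> v \<notin> W5 a b c d"
      using BC by (auto simp: set_canon_LR Inr_W5)
    ultimately show ?thesis using 2 by (intro exI[of _ "Inl b"] exI[of _ "Inr (att b)"]) (auto simp: W5_def)
  next
    case 3
    have "pe (canon (Inl c) (Inr (att c))) \<subseteq> span_edges T Q"
      using BC pe_canon_LR pend_sub[of c] by auto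
    moreover have "\<forall>v\<in>set (canon (Inl c) (Inr (att c))). v \<noteq> Inl c \<longrightarrow> v \<noteq> Inr (att c) \<longrightarrow> v \<notin> W5 a b c d"
      using BC by (auto simp: set_canon_LR Inr_W5)
    ultimately show ?thesis using 3 by (intro exI[of _ "Inl c"] exI[of _ "Inr (att c)"]) (auto simp: W5_def)
  next
    case 4
    have "pe (canon (Inl d) (Inr (att c))) \<subseteq> span_edges T Q"
      using BC pe_canon_LR spe_sub[of "att c" "att d"] pend_sub[of d] by auto
    moreover have "\<forall>v\<in>set (canon (Inl d) (Inr (att c))). v \<noteq> Inl d \<longrightarrow> v \<noteq> Inr (att c) \<longrightarrow> v \<notin> W5 a b c d"
      using BC by (auto simp: set_canon_LR Inr_W5)
    ultimately show ?thesis using 4 by (intro exI[of _ "Inl d"] exI[of _ "Inr (att c)"]) (auto simp: W5_def)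
  next
    case 5
    have "pe (canon (Inr (att b)) (Inr (att c))) \<subseteq> span_edges T Q"
      using BC pe_canon_RR spe_sub[of "att b" "att c"] by auto
    moreover have "\<forall>v\<in>set (canon (Inr (att b)) (Inr (att c))). v \<noteq> Inr (att b) \<longrightarrow> v \<noteq> Inr (att c) \<longrightarrow> v \<notin> W5 a b c d"
      using BC by (auto simp: set_canon_RR Inr_W5)
    ultimately show ?thesis using 5 BC by (intro exI[of _ "Inr (att b)"] exI[of _ "Inr (att c)"]) (auto simp: W5_def)
  qed
qed

end

context cat begin

lemma path_char:
  assumes "SPE \<subseteq> E" "u \<in> V" "w \<in> V"
  shows "(\<exists>p. simple_path SPE p \<and> hd p = u \<and> last p = w \<and> (\<forall>i. 0 < i \<and> Suc i < length p \<longrightarrow> p ! i \<notin> W))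
     \<longleftrightarrow> (pe (canon u w) \<subseteq> SPE \<and> (\<forall>v\<in>set (canon u w). v \<noteq> u \<longrightarrow> v \<noteq> w \<longrightarrow> v \<notin> W))"
proof
  assume "\<exists>p. simple_path SPE p \<and> hd p = u \<and> last p = w \<and> (\<forall>i. 0 < i \<and> Suc i < length p \<longrightarrow> p ! i \<notin> W)"
  then obtain p where p: "simple_path SPE p" "hd p = u" "last p = w" "\<forall>i. 0 < i \<and> Suc i < length p \<longrightarrow> p ! i \<notin> W"
    by blast
  have "simple_path E p" using p(1) assms(1) by (auto simp: simple_path_pe)
  then have pc: "p = canon u w" using path_unique[OF \<open>simple_path E p\<close>] p(2,3) by simp
  have "distinct p" "p \<noteq> []" using p(1) by (auto simp: simple_path_pe)
  then have "\<forall>v\<in>set p. v \<noteq> hd p \<longrightarrow> v \<noteq> last p \<longrightarrow> v \<notin> W" using interior_iff p(4) by blast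
  then show "pe (canon u w) \<subseteq> SPE \<and> (\<forall>v\<in>set (canon u w). v \<noteq> u \<longrightarrow> v \<noteq> w \<longrightarrow> v \<notin> W)"
    using p(1,2,3) pc by (auto simp: simple_path_pe)
next
  assume h: "pe (canon u w) \<subseteq> SPE \<and> (\<forall>v\<in>set (canon u w). v \<noteq> u \<longrightarrow> v \<noteq> w \<longrightarrow> v \<notin> W)"
  have "simple_path SPE (canon u w)" using h by (simp add: simple_path_pe distinct_canon)
  moreover have "\<forall>i. 0 < i \<and> Suc i < length (canon u w) \<longrightarrow> canon u w ! i \<notin> W"
    using interior_iff[OF distinct_canon[of u w] canon_ne[of u w], of W] h by simp
  ultimately show "\<exists>p. simple_path SPE p \<and> hd p = u \<and> last p = w \<and> (\<forall>i. 0 < i \<and> Suc i < length p \<longrightarrow> p ! i \<notin> W)"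
    by (intro exI[of _ "canon u w"]) simp
qed

end

context cat4 begin

lemma restrict_Q: "restrict_tree T Q = (W5 a b c d, RE5 a b c d)"
proof -
  have snd_eq: "snd (span_tree T Q) = span_edges T Q" by (simp add: span_tree_def)
  let ?P = "\<lambda>u w. \<exists>p. simple_path (span_edges T Q) p \<and> hd p = u \<and> last p = w \<and>
                 (\<forall>i. 0 < i \<and> Suc i < length p \<longrightarrow> p ! i \<notin> W5 a b c d)"
  have 1: "restrict_tree T Q = (W5 a b c d, {{u, w} |u w. u \<in> W5 a b c d \<and> w \<in> W5 a b c d \<and> u \<noteq> w \<and> ?P u w})"
    unfolding restrict_tree_def Let_def snd_eq W_eq2 by (rule refl)
  have 2: "{{u, w} |u w. u \<in> W5 a b c d \<and> w \<in> W5 a b c d \<and> u \<noteq> w \<and> ?P u w} = RE5 a b c d"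
  proof (rule set_eqI)
    fix e
    show "e \<in> {{u, w} |u w. u \<in> W5 a b c d \<and> w \<in> W5 a b c d \<and> u \<noteq> w \<and> ?P u w} \<longleftrightarrow> e \<in> RE5 a b c d"
    proof
      assume "e \<in> {{u, w} |u w. u \<in> W5 a b c d \<and> w \<in> W5 a b c d \<and> u \<noteq> w \<and> ?P u w}"
      then obtain u w where h: "e = {u, w}" "u \<in> W5 a b c d" "w \<in> W5 a b c d" "u \<noteq> w" "?P u w"
        unfolding mem_Collect_eq by blast
      have uV: "u \<in> V" "w \<in> V" using h(2,3) W5_V by auto
      have "pe (canon u w) \<subseteq> span_edges T Q \<and> (\<forall>v\<in>set (canon u w). v \<noteq> u \<longrightarrow> v \<noteq> w \<longrightarrow> v \<notin> W5 a b c d)"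
        using path_char[OF SPE_sub uV] h(5) by (rule iffD1)
      then have "{u, w} \<in> RE5 a b c d" using classify[OF h(2) h(3) h(4)] by blast
      then show "e \<in> RE5 a b c d" using h(1) by simp
    next
      assume "e \<in> RE5 a b c d"
      then obtain u w where h: "e = {u, w}" "u \<in> W5 a b c d" "w \<in> W5 a b c d" "u \<noteq> w"
        and g: "pe (canon u w) \<subseteq> span_edges T Q \<and> (\<forall>v\<in>set (canon u w). v \<noteq> u \<longrightarrow> v \<noteq> w \<longrightarrow> v \<notin> W5 a b c d)"
        using good_edge by blast
      have uV: "u \<in> V" "w \<in> V" using h(2,3) W5_V by auto
      have "?P u w" using path_char[OF SPE_sub uV] g by (rule iffD2)
      then show "e \<in> {{u, w} |u w. u \<in> W5 a b c d \<and> w \<in> W5 a b c d \<and> u \<noteq> w \<and> ?P u w}"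
        unfolding mem_Collect_eq using h by blast
    qed
  qed
  show ?thesis using 1 2 by simp
qed

lemma iso_Q: "tree_iso (restrict_tree T Q) (quartet_tree a b c d)"
proof -
  define f :: "nat vert \<Rightarrow> nat vert" where
    "f v = (if v = Inr (att b) then Inr 0 else if v = Inr (att c) then Inr 1 else v)" for v
  have BC: "att b \<noteq> att c" using attbc by simp
  have fB: "f (Inr (att b)) = Inr 0" and fC: "f (Inr (att c)) = Inr 1" and fL: "\<And>x. f (Inl x) = Inl x"
    using BC by (auto simp: f_def)
  have inj: "inj_on f (W5 a b c d)"
    unfolding W5_def inj_on_def using BC by (auto simp: f_def)
  have img: "f ` W5 a b c d = fst (quartet_tree a b c d)"
    unfolding W5_def quartet_tree_def by (simp add: fB fC fL)
  have eimg: "(image f) ` RE5 a b c d = snd (quartet_tree a b c d)"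
    unfolding RE5_def quartet_tree_def by (simp add: fB fC fL)
  have RE_pow: "RE5 a b c d \<subseteq> Pow (W5 a b c d)" unfolding RE5_def W5_def by auto
  have edges: "\<forall>u\<in>W5 a b c d. \<forall>v\<in>W5 a b c d. {u, v} \<in> RE5 a b c d \<longleftrightarrow> {f u, f v} \<in> snd (quartet_tree a b c d)"
  proof (intro ballI)
    fix u v assume uv: "u \<in> W5 a b c d" "v \<in> W5 a b c d"
    have "{f u, f v} = f ` {u, v}" by simp
    moreover have "f ` {u, v} \<in> (image f) ` RE5 a b c d \<longleftrightarrow> {u, v} \<in> RE5 a b c d"
      using inj_on_image_mem_iff[OF inj_on_image_Pow[OF inj], of "{u, v}" "RE5 a b c d"] uv RE_pow by auto
    ultimately show "{u, v} \<in> RE5 a b c d \<longleftrightarrow> {f u, f v} \<in> snd (quartet_tree a b c d)"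
      using eimg by simp
  qed
  show ?thesis unfolding tree_iso_def restrict_Q fst_conv snd_conv
    using inj img edges fL by (intro exI[of _ f]) (auto simp: bij_betw_def)
qed

lemma cherry_RE5:
  assumes "{v, Inl x} \<in> RE5 a b c d" "{v, Inl y} \<in> RE5 a b c d" "x \<noteq> y"
  shows "{x, y} = {a, b} \<or> {x, y} = {c, d}"
proof -
  have BC: "att b \<noteq> att c" using attbc by simp
  have m: "(v = Inr (att b) \<and> (z = a \<or> z = b)) \<or> (v = Inr (att c) \<and> (z = c \<or> z = d))"
    if "{v, Inl z} \<in> RE5 a b c d" for z
    using that unfolding RE5_def by (auto simp: doubleton_eq_iff)
  show ?thesis using m[OF assms(1)] m[OF assms(2)] assms(3) BC by auto
qed

end

context cat begin

lemma sort_exists: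
  assumes Q: "Q \<subseteq> {0..<n}" "card Q = 4"
  shows "\<exists>a b c d. Q = {a, b, c, d} \<and> sorted4 a b c d"
proof -
  have injr: "inj_on \<rho> {0..<n}"
    by (rule inj_onI) (metis atLeastLessThan_iff rs)
  have fin: "finite Q" using Q(2) by (simp add: card_ge_0_finite)
  have cP: "card (\<rho> ` Q) = 4" using Q(2) card_image[OF inj_on_subset[OF injr Q(1)]] by simp
  define xs where "xs = sorted_list_of_set (\<rho> ` Q)"
  have xs: "set xs = \<rho> ` Q" "length xs = 4" "sorted_wrt (<) xs"
    using fin cP by (simp_all add: xs_def strict_sorted_list_of_set)
  obtain A B C D where ABCD: "xs = [A, B, C, D]"
    using xs(2) by (auto simp: numeral_eq_Suc length_Suc_conv)
  have ord: "A < B" "B < C" "C < D" using xs(3) ABCD by auto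
  have s1: "set xs = {A, B, C, D}" using ABCD by simp
  have PQ: "\<rho> ` Q = {A, B, C, D}" using xs(1) s1 by metis
  have bk: "\<sigma> ` \<rho> ` Q = Q"
  proof -
    have "\<sigma> ` \<rho> ` Q = (\<lambda>x. \<sigma> (\<rho> x)) ` Q" by (simp add: image_image)
    also have "\<dots> = (\<lambda>x. x) ` Q"
    proof (rule image_cong)
      fix x assume "x \<in> Q" then show "\<sigma> (\<rho> x) = x" using Q(1) rs by auto
    qed simp
    also have "\<dots> = Q" by simp
    finally show ?thesis .
  qed
  have mem: "A \<in> \<rho> ` Q" "B \<in> \<rho> ` Q" "C \<in> \<rho> ` Q" "D \<in> \<rho> ` Q" using PQ by auto
  have ltn: "y < n" if "y \<in> \<rho> ` Q" for y using that Q(1) rs by auto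
  have sig: "\<sigma> y < n \<and> \<rho> (\<sigma> y) = y" if "y \<in> \<rho> ` Q" for y using sr ltn that by blast
  have "Q = {\<sigma> A, \<sigma> B, \<sigma> C, \<sigma> D}" using bk PQ by simp
  moreover have "sorted4 (\<sigma> A) (\<sigma> B) (\<sigma> C) (\<sigma> D)"
    unfolding sorted4_def using sig[OF mem(1)] sig[OF mem(2)] sig[OF mem(3)] sig[OF mem(4)] ord by simp
  ultimately show ?thesis by blast
qed

lemma cat4I: "sorted4 a b c d \<Longrightarrow> cat4 n \<sigma> \<rho> a b c d"
  by (simp add: cat4_def cat4_axioms_def cat_axioms)

lemma restrict_leaf:
  assumes Q: "Q \<subseteq> {0..<n}" "card Q = 4" and x: "x \<in> Q"
  shows "Inl x \<in> fst (restrict_tree T Q)"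
proof -
  obtain a b c d where abcd: "Q = {a, b, c, d}" "sorted4 a b c d" using sort_exists[OF Q] by blast
  interpret q: cat4 n \<sigma> \<rho> a b c d by (rule cat4I[OF abcd(2)])
  show ?thesis using x abcd(1) q.restrict_Q by (auto simp: W5_def)
qed

lemma cherry_gen:
  assumes Q: "Q \<subseteq> {0..<n}" "card Q = 4" and xy: "x \<in> Q" "y \<in> Q" "x \<noteq> y"
    and e: "{v, Inl x} \<in> snd (restrict_tree T Q)" "{v, Inl y} \<in> snd (restrict_tree T Q)"
  shows "(\<forall>z\<in>Q. z \<noteq> x \<longrightarrow> z \<noteq> y \<longrightarrow> \<rho> x < \<rho> z \<and> \<rho> y < \<rho> z) \<or>
         (\<forall>z\<in>Q. z \<noteq> x \<longrightarrow> z \<noteq> y \<longrightarrow> \<rho> z < \<rho> x \<and> \<rho> z < \<rho> y)"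
proof -
  obtain a b c d where abcd: "Q = {a, b, c, d}" "sorted4 a b c d" using sort_exists[OF Q] by blast
  interpret q: cat4 n \<sigma> \<rho> a b c d by (rule cat4I[OF abcd(2)])
  have "{x, y} = {a, b} \<or> {x, y} = {c, d}"
    using q.cherry_RE5[of v x y] e xy(3) abcd(1) q.restrict_Q by simp
  then show ?thesis
  proof
    assume h: "{x, y} = {a, b}"
    have "\<rho> x < \<rho> z \<and> \<rho> y < \<rho> z" if "z \<in> Q" "z \<noteq> x" "z \<noteq> y" for z
    proof -
      have "z = c \<or> z = d" using that h abcd(1) by (auto simp: doubleton_eq_iff)
      moreover have "x = a \<or> x = b" "y = a \<or> y = b" using h by (auto simp: doubleton_eq_iff)
      ultimately show ?thesis using q.ord by auto
    qed
    then show ?thesis by blast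
  next
    assume h: "{x, y} = {c, d}"
    have "\<rho> z < \<rho> x \<and> \<rho> z < \<rho> y" if "z \<in> Q" "z \<noteq> x" "z \<noteq> y" for z
    proof -
      have "z = a \<or> z = b" using that h abcd(1) by (auto simp: doubleton_eq_iff)
      moreover have "x = c \<or> x = d" "y = c \<or> y = d" using h by (auto simp: doubleton_eq_iff)
      ultimately show ?thesis using q.ord by auto
    qed
    then show ?thesis by blast
  qed
qed

end

context cat4 begin

lemma card_Q: "card Q = 4" using dist by simp

lemma L_Q: "L_edges T Q = span_edges T {a, b} \<union> span_edges T {c, d}"
proof
  show "span_edges T {a, b} \<union> span_edges T {c, d} \<subseteq> L_edges T Q"
  proof
    fix e assume e: "e \<in> span_edges T {a, b} \<union> span_edges T {c, d}"
    show "e \<in> L_edges T Q" unfolding L_edges_def mem_Collect_eq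
      by (rule exI[of _ a], rule exI[of _ b], rule exI[of _ c], rule exI[of _ d]) (use e in \<open>simp add: iso_Q\<close>)
  qed
next
  show "L_edges T Q \<subseteq> span_edges T {a, b} \<union> span_edges T {c, d}"
  proof
    fix e assume "e \<in> L_edges T Q"
    then have "\<exists>a' b' c' d'. Q = {a', b', c', d'} \<and> tree_iso (restrict_tree T Q) (quartet_tree a' b' c' d') \<and>
      e \<in> span_edges T {a', b'} \<union> span_edges T {c', d'}"
      unfolding L_edges_def mem_Collect_eq .
    then show "e \<in> span_edges T {a, b} \<union> span_edges T {c, d}"
    proof (elim exE conjE)
      fix a' b' c' d'
      assume h1: "Q = {a', b', c', d'}" and h2: "tree_iso (restrict_tree T Q) (quartet_tree a' b' c' d')"
        and h3: "e \<in> span_edges T {a', b'} \<union> span_edges T {c', d'}"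
      have c4: "card {a', b', c', d'} = 4" using card_Q unfolding h1 .
      have d': "a' \<noteq> b'" "c' \<noteq> d'" using card4_distinct[OF c4] by auto
      have mem: "a' \<in> Q" "b' \<in> Q" "c' \<in> Q" "d' \<in> Q" unfolding h1 by simp_all
      have inR: "Inl z \<in> fst (restrict_tree T Q)" if "z \<in> Q" for z
        using that restrict_Q by (simp add: W5_def)
      obtain v where v: "{v, Inl a'} \<in> snd (restrict_tree T Q)" "{v, Inl b'} \<in> snd (restrict_tree T Q)"
        using iso_quartet_cherry[OF h2 inR[OF mem(1)] inR[OF mem(2)]] by blast
      obtain w where w: "{w, Inl c'} \<in> snd (restrict_tree T Q)" "{w, Inl d'} \<in> snd (restrict_tree T Q)"
        using iso_quartet_cherry2[OF h2 inR[OF mem(3)] inR[OF mem(4)]] by blast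
      have 1: "{a', b'} = {a, b} \<or> {a', b'} = {c, d}"
        using cherry_RE5[of v a' b'] v d'(1) restrict_Q by simp
      have 2: "{c', d'} = {a, b} \<or> {c', d'} = {c, d}"
        using cherry_RE5[of w c' d'] w d'(2) restrict_Q by simp
      have s1: "span_edges T {a', b'} \<subseteq> span_edges T {a, b} \<union> span_edges T {c, d}"
        using 1 by (elim disjE) simp_all
      have s2: "span_edges T {c', d'} \<subseteq> span_edges T {a, b} \<union> span_edges T {c, d}"
        using 2 by (elim disjE) simp_all
      show "e \<in> span_edges T {a, b} \<union> span_edges T {c, d}" using h3 s1 s2 by blast
    qed
  qed
qed

lemma pends_in_L: "pend a \<in> L_edges T Q" "pend b \<in> L_edges T Q" "pend c \<in> L_edges T Q" "pend d \<in> L_edges T Q"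
  unfolding L_Q using span_pair[of a b] span_pair[of c d] lt dist by auto

lemma L_sub_E: "L_edges T Q \<subseteq> E"
proof -
  have "span_edges T Y \<subseteq> E" for Y
    unfolding span_edges_def T_def by (auto simp: simple_path_pe path_edges_pe)
  then show ?thesis unfolding L_Q by auto
qed

end

definition tr :: "nat \<Rightarrow> nat \<Rightarrow> nat" where "tr m i = (i mod m) * m + i div m"

lemma tr_lt: assumes "0 < m" "i < m * m" shows "tr m i < m * m"
proof -
  have q: "i div m < m" using assms by (simp add: div_less_iff_less_mult)
  have r: "i mod m + 1 \<le> m" using mod_less_divisor[OF assms(1), of i] by simp
  have "tr m i < (i mod m) * m + m" using q by (simp add: tr_def)
  also have "\<dots> = (i mod m + 1) * m" by simp
  also have "\<dots> \<le> m * m" using r by (rule mult_right_mono) simp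
  finally show ?thesis .
qed

lemma tr_tr: assumes "0 < m" "i < m * m" shows "tr m (tr m i) = i"
proof -
  have q: "i div m < m" using assms by (simp add: div_less_iff_less_mult)
  have 1: "tr m i mod m = i div m" using q by (simp add: tr_def)
  have 2: "tr m i div m = i mod m" using q assms by (simp add: tr_def)
  show ?thesis unfolding tr_def[of m "tr m i"] 1 2 by simp
qed

lemma tr_dist:
  assumes m: "2 \<le> m" and ii: "i < i'" "i' < m * m"
  shows "m \<le> (i' - i) + (max (tr m i) (tr m i') - min (tr m i) (tr m i'))"
proof -
  define q r q' r' where "q = i div m" "r = i mod m" "q' = i' div m" "r' = i' mod m"
  have rm: "r < m" "r' < m" using m by (simp_all add: q_r_q'_r'_def)
  have ei: "i = q * m + r" "i' = q' * m + r'" by (simp_all add: q_r_q'_r'_def)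
  have et: "tr m i = r * m + q" "tr m i' = r' * m + q'" by (simp_all add: q_r_q'_r'_def tr_def)
  have qq: "q \<le> q'" using ii unfolding q_r_q'_r'_def by (simp add: div_le_mono)
  define M Q R Q' R' where "M = int m" "Q = int q" "R = int r" "Q' = int q'" "R' = int r'"
  have I: "int i = Q * M + R" "int i' = Q' * M + R'" using ei by (simp_all add: M_Q_R_Q'_R'_def)
  have P: "int (tr m i) = R * M + Q" "int (tr m i') = R' * M + Q'" using et by (simp_all add: M_Q_R_Q'_R'_def)
  have bounds: "0 \<le> R" "R < M" "0 \<le> R'" "R' < M" "Q \<le> Q'" "2 \<le> M" "0 \<le> Q"
    using rm qq m by (simp_all add: M_Q_R_Q'_R'_def)
  have ilt: "Q * M + R < Q' * M + R'" using ii I by linarith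
  have goal: "M \<le> (int i' - int i) + \<bar>int (tr m i') - int (tr m i)\<bar>"
  proof (cases "Q = Q'")
    case True
    then have "R < R'" using ilt by simp
    then have "1 * M \<le> (R' - R) * M" using bounds by (intro mult_right_mono) auto
    then have "M \<le> int (tr m i') - int (tr m i)" using P True by (simp add: algebra_simps)
    moreover have "0 \<le> int i' - int i" using ii by simp
    ultimately show ?thesis by linarith
  next
    case False
    then have QQ: "Q + 1 \<le> Q'" using bounds by simp
    have a1: "1 * M \<le> (Q' - Q) * M" using QQ bounds by (intro mult_right_mono) auto
    show ?thesis
    proof (cases "R \<le> R'")
      case True
      have "M \<le> int i' - int i" using a1 I True by (simp add: algebra_simps)
      then show ?thesis by linarith
    next
      case False
      have b1: "1 * (M - 1) \<le> (Q' - Q) * (M - 1)" using QQ bounds by (intro mult_right_mono) auto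
      have b2: "1 * (M - 1) \<le> (R - R') * (M - 1)" using False bounds by (intro mult_right_mono) auto
      have "(int i' - int i) + (int (tr m i) - int (tr m i')) = (Q' - Q) * (M - 1) + (R - R') * (M - 1)"
        using I P by (simp add: algebra_simps)
      then have "2 * (M - 1) \<le> (int i' - int i) + (int (tr m i) - int (tr m i'))" using b1 b2 by linarith
      moreover have "int (tr m i) - int (tr m i') \<le> \<bar>int (tr m i') - int (tr m i)\<bar>" by simp
      ultimately show ?thesis using bounds by (smt (verit))
    qed
  qed
  have "int (max (tr m i) (tr m i') - min (tr m i) (tr m i')) = \<bar>int (tr m i') - int (tr m i)\<bar>"
    by (simp add: max_def min_def)
  then show ?thesis using goal ii unfolding M_Q_R_Q'_R'_def by linarith
qed



locale gap =
  fixes m :: nat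
  assumes m5: "5 \<le> m"
begin

lemma m_pos: "0 < m" using m5 by simp
lemma n4: "4 \<le> m * m"
proof -
  have "5 * 1 \<le> m * m" using m5 by (intro mult_mono) auto
  then show ?thesis by simp
qed

sublocale c1: cat "m * m" id id
  using n4 by unfold_locales auto

sublocale c2: cat "m * m" "tr m" "tr m"
  using n4 tr_lt[OF m_pos] tr_tr[OF m_pos] by unfold_locales auto

abbreviation XX :: "nat set" where "XX \<equiv> {0..<m * m}"

lemma sndT1: "snd c1.T = c1.E" by (simp add: c1.T_def)

lemma finE: "finite c1.E" by (simp add: c1.E_def)

lemma att1_mono: "x < m * m \<Longrightarrow> y < m * m \<Longrightarrow> x \<le> y \<Longrightarrow> c1.att x \<le> c1.att y"
  using c1.att_le by simp

lemma compat:
  assumes abcd: "a < b" "b < c" "c < d" "d < m * m"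
    and iso: "tree_iso (restrict_tree c1.T {a, b, c, d}) (restrict_tree c2.T {a, b, c, d})"
  shows "(tr m a < tr m c \<and> tr m a < tr m d \<and> tr m b < tr m c \<and> tr m b < tr m d) \<or>
         (tr m c < tr m a \<and> tr m d < tr m a \<and> tr m c < tr m b \<and> tr m d < tr m b)"
proof -
  have s4: "c1.sorted4 a b c d" using abcd by (simp add: c1.sorted4_def)
  interpret q: cat4 "m * m" id id a b c d by (rule c1.cat4I[OF s4])
  have R1: "restrict_tree c1.T {a, b, c, d} = (c1.W5 a b c d, c1.RE5 a b c d)" by (rule q.restrict_Q)
  have e1: "{Inr (c1.att b), Inl a} \<in> snd (restrict_tree c1.T {a, b, c, d})"
    "{Inr (c1.att b), Inl b} \<in> snd (restrict_tree c1.T {a, b, c, d})"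
    unfolding R1 by (auto simp: c1.RE5_def insert_commute)
  have v1: "Inr (c1.att b) \<in> fst (restrict_tree c1.T {a, b, c, d})"
    "Inl a \<in> fst (restrict_tree c1.T {a, b, c, d})" "Inl b \<in> fst (restrict_tree c1.T {a, b, c, d})"
    unfolding R1 by (auto simp: c1.W5_def)
  obtain w where w: "{w, Inl a} \<in> snd (restrict_tree c2.T {a, b, c, d})" "{w, Inl b} \<in> snd (restrict_tree c2.T {a, b, c, d})"
    using iso_transfer[OF iso e1 v1] by blast
  have Qs: "{a, b, c, d} \<subseteq> {0..<m * m}" using abcd by auto
  have c4: "card {a, b, c, d} = 4" by (rule q.card_Q)
  have ab: "a \<noteq> b" using abcd by simp
  from c2.cherry_gen[OF Qs c4 _ _ ab w] have
    "(\<forall>z\<in>{a, b, c, d}. z \<noteq> a \<longrightarrow> z \<noteq> b \<longrightarrow> tr m a < tr m z \<and> tr m b < tr m z) \<or>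
     (\<forall>z\<in>{a, b, c, d}. z \<noteq> a \<longrightarrow> z \<noteq> b \<longrightarrow> tr m z < tr m a \<and> tr m z < tr m b)" by simp
  then show ?thesis
  proof
    assume h: "\<forall>z\<in>{a, b, c, d}. z \<noteq> a \<longrightarrow> z \<noteq> b \<longrightarrow> tr m a < tr m z \<and> tr m b < tr m z"
    have "c \<noteq> a" "c \<noteq> b" "d \<noteq> a" "d \<noteq> b" using abcd by auto
    then show ?thesis using h by auto
  next
    assume h: "\<forall>z\<in>{a, b, c, d}. z \<noteq> a \<longrightarrow> z \<noteq> b \<longrightarrow> tr m z < tr m a \<and> tr m z < tr m b"
    have "c \<noteq> a" "c \<noteq> b" "d \<noteq> a" "d \<noteq> b" using abcd by auto
    then show ?thesis using h by auto
  qed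
qed

lemma incompat_Q0: "{0, 1, m, m + 1} \<in> incompatible_quartets XX c1.T c2.T"
proof -
  have mm: "m + 1 < m * m"
  proof -
    have "m * 2 \<le> m * m" using m5 by (intro mult_le_mono2) simp
    then show ?thesis using m5 by linarith
  qed
  have sub: "{0, 1, m, m + 1} \<subseteq> XX" using mm m5 by auto
  have c4: "card {0, 1, m, m + 1} = 4" using m5 by simp
  have d1: "(m + 1) div m = 1" using m5 by (subst div_add_self1) auto
  have d2: "(m + 1) mod m = 1" using m5 by (subst mod_add_self1) auto
  have t0: "tr m 0 = 0" and t1: "tr m 1 = m" and tm: "tr m m = 1"
    using m5 by (simp_all add: tr_def)
  have tm1: "tr m (m + 1) = m + 1" unfolding tr_def d1 d2 by simp
  have "\<not> tree_iso (restrict_tree c1.T {0, 1, m, m + 1}) (restrict_tree c2.T {0, 1, m, m + 1})"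
  proof
    assume iso: "tree_iso (restrict_tree c1.T {0, 1, m, m + 1}) (restrict_tree c2.T {0, 1, m, m + 1})"
    have "(0::nat) < 1" "1 < m" "m < m + 1" using m5 by auto
    from compat[OF this mm iso] show False using t0 t1 tm tm1 m5 by simp
  qed
  then show ?thesis unfolding incompatible_quartets_def using sub c4 by simp
qed

lemma L_facts:
  assumes "Q \<subseteq> XX" "card Q = 4"
  obtains a b c d where "Q = {a, b, c, d}" "a \<noteq> b" "a \<noteq> c" "a \<noteq> d" "b \<noteq> c" "b \<noteq> d" "c \<noteq> d"
     "{c1.pend a, c1.pend b, c1.pend c, c1.pend d} \<subseteq> L_edges c1.T Q" "L_edges c1.T Q \<subseteq> c1.E"
proof -
  obtain a b c d where abcd: "Q = {a, b, c, d}" "c1.sorted4 a b c d" using c1.sort_exists[OF assms] by blast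
  interpret q: cat4 "m * m" id id a b c d by (rule c1.cat4I[OF abcd(2)])
  have p: "{c1.pend a, c1.pend b, c1.pend c, c1.pend d} \<subseteq> L_edges c1.T {a, b, c, d}"
    using q.pends_in_L by simp
  show thesis
    by (rule that[of a b c d]) (use abcd(1) q.dist p q.L_sub_E in simp_all)
qed

lemma pend_inj1: "inj c1.pend" by (rule c1.pend_inj)

lemma frac_bounds: "1 \<le> opt_frac XX c1.T c2.T \<and> opt_frac XX c1.T c2.T \<le> real (m * m) / 4"
proof -
  let ?S = "{(\<Sum>e\<in>snd c1.T. x e) | x. lp_feasible XX c1.T c2.T x}"
  define x0 where "x0 e = (if e \<in> c1.pend ` XX then 1 / 4 else (0::real))" for e
  have P_sub: "c1.pend ` XX \<subseteq> c1.E" by (auto simp: c1.E_def)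
  have feas0: "lp_feasible XX c1.T c2.T x0"
    unfolding lp_feasible_def
  proof (intro conjI ballI)
    fix Q assume "Q \<in> incompatible_quartets XX c1.T c2.T"
    then have Q: "Q \<subseteq> XX" "card Q = 4" by (simp_all add: incompatible_quartets_def)
    obtain a b c d where h: "Q = {a, b, c, d}" "a \<noteq> b" "a \<noteq> c" "a \<noteq> d" "b \<noteq> c" "b \<noteq> d" "c \<noteq> d"
      "{c1.pend a, c1.pend b, c1.pend c, c1.pend d} \<subseteq> L_edges c1.T Q" "L_edges c1.T Q \<subseteq> c1.E"
      by (rule L_facts[OF Q])
    have fin: "finite (L_edges c1.T Q)" using h(9) finE by (rule finite_subset)
    have "a \<in> XX" "b \<in> XX" "c \<in> XX" "d \<in> XX" using Q(1) h(1) by auto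
    then have xv: "x0 (c1.pend a) = 1/4" "x0 (c1.pend b) = 1/4" "x0 (c1.pend c) = 1/4" "x0 (c1.pend d) = 1/4"
      by (auto simp: x0_def)
    have pd: "c1.pend a \<noteq> c1.pend b" "c1.pend a \<noteq> c1.pend c" "c1.pend a \<noteq> c1.pend d"
      "c1.pend b \<noteq> c1.pend c" "c1.pend b \<noteq> c1.pend d" "c1.pend c \<noteq> c1.pend d"
      using h(2-7) pend_inj1 by (auto dest: injD)
    have "(\<Sum>e\<in>{c1.pend a, c1.pend b, c1.pend c, c1.pend d}. x0 e) = 1"
      using pd xv by simp
    moreover have "(\<Sum>e\<in>{c1.pend a, c1.pend b, c1.pend c, c1.pend d}. x0 e) \<le> (\<Sum>e\<in>L_edges c1.T Q. x0 e)"
      by (rule sum_mono2[OF fin h(8)]) (simp add: x0_def)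
    ultimately show "1 \<le> (\<Sum>e\<in>L_edges c1.T Q. x0 e)" by simp
  next
    fix e show "0 \<le> x0 e" by (simp add: x0_def)
  qed
  have sum0: "(\<Sum>e\<in>snd c1.T. x0 e) = real (m * m) / 4"
  proof -
    have "(\<Sum>e\<in>c1.E. x0 e) = (\<Sum>e\<in>c1.pend ` XX. 1 / 4)"
      by (rule sum.mono_neutral_cong_right[OF finE P_sub]) (auto simp: x0_def)
    also have "\<dots> = real (card (c1.pend ` XX)) / 4" by simp
    also have "card (c1.pend ` XX) = m * m" using pend_inj1 by (simp add: card_image inj_on_subset)
    finally show ?thesis unfolding sndT1 .
  qed
  have low: "1 \<le> s" if "s \<in> ?S" for s
  proof -
    obtain x where x: "s = (\<Sum>e\<in>snd c1.T. x e)" "lp_feasible XX c1.T c2.T x" using \<open>s \<in> ?S\<close> by blast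
    have Q0: "{0, 1, m, m + 1} \<subseteq> XX" "card {0, 1, m, m + 1} = 4"
      using incompat_Q0 by (simp_all add: incompatible_quartets_def)
    obtain a b c d where h: "{0, 1, m, m + 1} = {a, b, c, d}" "a \<noteq> b" "a \<noteq> c" "a \<noteq> d" "b \<noteq> c" "b \<noteq> d" "c \<noteq> d"
      "{c1.pend a, c1.pend b, c1.pend c, c1.pend d} \<subseteq> L_edges c1.T {0, 1, m, m + 1}"
      "L_edges c1.T {0, 1, m, m + 1} \<subseteq> c1.E"
      by (rule L_facts[OF Q0])
    have "1 \<le> (\<Sum>e\<in>L_edges c1.T {0, 1, m, m + 1}. x e)"
      using x(2) incompat_Q0 by (auto simp: lp_feasible_def)
    also have "\<dots> \<le> (\<Sum>e\<in>c1.E. x e)"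
      by (rule sum_mono2[OF finE h(9)]) (use x(2) in \<open>auto simp: lp_feasible_def sndT1\<close>)
    finally show ?thesis using x(1) by (simp add: sndT1)
  qed
  have inS: "real (m * m) / 4 \<in> ?S" using feas0 sum0 by (metis (mono_tags, lifting) mem_Collect_eq)
  have "opt_frac XX c1.T c2.T \<le> real (m * m) / 4"
    unfolding opt_frac_def by (rule cInf_lower[OF inS]) (use low in \<open>auto simp: bdd_below_def\<close>)
  moreover have "1 \<le> opt_frac XX c1.T c2.T"
    unfolding opt_frac_def by (rule cInf_greatest) (use inS low in auto)
  ultimately show ?thesis by simp
qed

end

context gap begin

lemma count:
  assumes feas: "ip_feasible XX c1.T c2.T x"
  shows "real (m * m) - 4 * real m - 1 \<le> (\<Sum>e\<in>c1.E. x e)"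
proof -
  have x01: "\<And>e. e \<in> c1.E \<Longrightarrow> x e = 0 \<or> x e = 1" using feas by (auto simp: ip_feasible_def sndT1)
  have cov: "\<And>Q. Q \<in> incompatible_quartets XX c1.T c2.T \<Longrightarrow> 1 \<le> (\<Sum>e\<in>L_edges c1.T Q. x e)"
    using feas by (auto simp: ip_feasible_def)
  define F where "F = {e \<in> c1.E. x e = 1}"
  have FE: "F \<subseteq> c1.E" by (auto simp: F_def)
  have finF: "finite F" using FE finE by (rule finite_subset)
  have sumF: "(\<Sum>e\<in>c1.E. x e) = real (card F)"
  proof -
    have "(\<Sum>e\<in>c1.E. x e) = (\<Sum>e\<in>F. 1)"
      by (rule sum.mono_neutral_cong_right[OF finE FE]) (use x01 in \<open>auto simp: F_def\<close>)
    then show ?thesis by simp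
  qed
  define K where "K = {i \<in> XX. c1.pend i \<notin> F}"
  define Cs where "Cs = {k \<in> {1..<m * m - 2}. (spe k :: nat vert set) \<in> F}"
  have KX: "K \<subseteq> XX" by (auto simp: K_def)
  have finK: "finite K" using KX by (rule finite_subset) simp
  have finCs: "finite Cs" by (auto simp: Cs_def)
  have cardF: "m * m + card Cs \<le> card K + card F"
  proof -
    have sub: "c1.pend ` (XX - K) \<union> spe ` Cs \<subseteq> F" by (auto simp: K_def Cs_def)
    have "card (c1.pend ` (XX - K) \<union> spe ` Cs) = card (c1.pend ` (XX - K)) + card (spe ` Cs :: nat vert set set)"
      by (rule card_Un_disjoint) (auto simp: finCs c1.pend_ne_spe)
    also have "\<dots> = card (XX - K) + card Cs"
      using pend_inj1 c1.spe_inj by (simp add: card_image inj_on_subset)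
    also have "card (XX - K) = m * m - card K" using KX by (simp add: card_Diff_subset finK)
    finally have "m * m - card K + card Cs \<le> card F" using card_mono[OF finF sub] by linarith
    moreover have "card K \<le> m * m" using card_mono[OF _ KX] by simp
    ultimately show ?thesis by linarith
  qed
  define ks where "ks = sorted_list_of_set K"
  define r where "r = length ks"
  have ks: "set ks = K" "sorted_wrt (<) ks" "r = card K"
    using finK by (simp_all add: ks_def r_def strict_sorted_list_of_set)
  have ks_lt: "ks ! j < ks ! j'" if "j < j'" "j' < r" for j j'
    using ks(2) that by (simp add: r_def sorted_wrt_nth_less)
  have ks_le: "ks ! j \<le> ks ! j'" if "j \<le> j'" "j' < r" for j j'
    using ks_lt[of j j'] that by (cases "j = j'") auto
  have ks_K: "ks ! j \<in> K" if "j < r" for j using ks(1) that by (auto simp: r_def)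
  have ks_n: "ks ! j < m * m" if "j < r" for j using ks_K[OF that] KX by auto
  define nocut where "nocut j \<longleftrightarrow> (\<forall>k. c1.att (ks ! j) \<le> k \<and> k < c1.att (ks ! Suc j) \<longrightarrow> k \<notin> Cs)" for j
  define Good where "Good = {j. Suc j < r \<and> nocut j}"
  define Bad where "Bad = {j. Suc j < r \<and> \<not> nocut j}"
  \<comment> \<open>an uncovered quartet is compatible\<close>
  have iso_of: "tree_iso (restrict_tree c1.T {a, b, c, d}) (restrict_tree c2.T {a, b, c, d})"
    if abcd: "a < b" "b < c" "c < d" "d < m * m" and K4: "a \<in> K" "b \<in> K" "c \<in> K" "d \<in> K"
      and nc: "\<forall>k. c1.att a \<le> k \<and> k < c1.att b \<longrightarrow> k \<notin> Cs" "\<forall>k. c1.att c \<le> k \<and> k < c1.att d \<longrightarrow> k \<notin> Cs"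
    for a b c d
  proof -
    have s4: "c1.sorted4 a b c d" using abcd by (simp add: c1.sorted4_def)
    interpret q: cat4 "m * m" id id a b c d by (rule c1.cat4I[OF s4])
    have attab: "c1.att a \<le> c1.att b" "c1.att c \<le> c1.att d" using att1_mono abcd by auto
    have ar: "1 \<le> c1.att a" "c1.att b \<le> m * m - 2" "1 \<le> c1.att c" "c1.att d \<le> m * m - 2"
      using c1.att_range abcd by (auto simp del: c1.att_def)
    have L: "L_edges c1.T {a, b, c, d} = insert (c1.pend a) (insert (c1.pend b) (spe ` {c1.att a..<c1.att b}))
        \<union> insert (c1.pend c) (insert (c1.pend d) (spe ` {c1.att c..<c1.att d}))"
      unfolding q.L_Q using c1.span_pair[of a b] c1.span_pair[of c d] abcd attab by (simp add: min_def max_def)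
    have notF: "e \<notin> F" if "e \<in> L_edges c1.T {a, b, c, d}" for e
    proof -
      have pnf: "c1.pend z \<notin> F" if "z \<in> K" for z using that by (simp add: K_def)
      have snf1: "spe k \<notin> F" if "k \<in> {c1.att a..<c1.att b}" for k
        using that nc(1) ar by (auto simp: Cs_def)
      have snf2: "spe k \<notin> F" if "k \<in> {c1.att c..<c1.att d}" for k
        using that nc(2) ar by (auto simp: Cs_def)
      show ?thesis using \<open>e \<in> L_edges c1.T {a, b, c, d}\<close> unfolding L
        using pnf[OF K4(1)] pnf[OF K4(2)] pnf[OF K4(3)] pnf[OF K4(4)] snf1 snf2 by blast
    qed
    have "(\<Sum>e\<in>L_edges c1.T {a, b, c, d}. x e) = 0"
    proof (rule sum.neutral, rule ballI)
      fix e assume e: "e \<in> L_edges c1.T {a, b, c, d}"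
      have "e \<in> c1.E" using e q.L_sub_E by blast
      then show "x e = 0" using x01 notF[OF e] by (auto simp: F_def)
    qed
    then have "{a, b, c, d} \<notin> incompatible_quartets XX c1.T c2.T" using cov by fastforce
    moreover have "{a, b, c, d} \<subseteq> XX" using abcd by auto
    ultimately show ?thesis using q.card_Q unfolding incompatible_quartets_def by blast
  qed
  \<comment> \<open>bad indices are injected into cut spine edges\<close>
  have bad_bound: "card Bad \<le> card Cs"
  proof -
    define g where "g j = (LEAST k. c1.att (ks ! j) \<le> k \<and> k < c1.att (ks ! Suc j) \<and> k \<in> Cs)" for j
    have gP: "c1.att (ks ! j) \<le> g j \<and> g j < c1.att (ks ! Suc j) \<and> g j \<in> Cs" if "j \<in> Bad" for j
    proof -
      have "\<exists>k. c1.att (ks ! j) \<le> k \<and> k < c1.att (ks ! Suc j) \<and> k \<in> Cs"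
        using that by (auto simp: Bad_def nocut_def)
      then show ?thesis unfolding g_def by (rule LeastI_ex)
    qed
    have lt: "g j < g j'" if "j \<in> Bad" "j' \<in> Bad" "j < j'" for j j'
    proof -
      have r': "j' < r" "Suc j < r" using that by (auto simp: Bad_def)
      have "ks ! Suc j \<le> ks ! j'" using ks_le[of "Suc j" j'] that r' by simp
      then have "c1.att (ks ! Suc j) \<le> c1.att (ks ! j')" using att1_mono ks_n r' by blast
      then show ?thesis using gP[OF that(1)] gP[OF that(2)] by linarith
    qed
    have "inj_on g Bad"
    proof (rule inj_onI)
      fix j j' assume "j \<in> Bad" "j' \<in> Bad" "g j = g j'"
      then show "j = j'" using lt[of j j'] lt[of j' j] by (cases j j' rule: linorder_cases) auto
    qed
    moreover have "g ` Bad \<subseteq> Cs" using gP by auto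
    ultimately show ?thesis by (rule card_inj_on_le[OF _ _ finCs])
  qed
  have cnt: "r - 1 \<le> card Good + card Bad"
  proof -
    have "{j. Suc j < r} = Good \<union> Bad" by (auto simp: Good_def Bad_def)
    moreover have "card {j. Suc j < r} = r - 1"
    proof -
      have "{j. Suc j < r} = {..<r - 1}" by auto
      then show ?thesis by simp
    qed
    ultimately show ?thesis using card_Un_le[of Good Bad] by simp
  qed
  have sep_bound: "card S \<le> 2 * m" if S: "S \<subseteq> Good" "\<forall>j\<in>S. \<forall>j'\<in>S. j < j' \<longrightarrow> Suc j < j'" for S
  proof -
    have finG: "finite Good" by (rule finite_subset[of _ "{..<r}"]) (auto simp: Good_def)
    have finS: "finite S" using S(1) finG by (rule finite_subset)
    have Sr: "Suc j < r" "nocut j" if "j \<in> S" for j using S(1) that by (auto simp: Good_def)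
    define I1 where "I1 j = {ks ! j..ks ! Suc j}" for j
    define I2 where "I2 j = {min (tr m (ks ! j)) (tr m (ks ! Suc j))..max (tr m (ks ! j)) (tr m (ks ! Suc j))}" for j
    have disj_lt: "I1 j \<inter> I1 j' = {} \<and> I2 j \<inter> I2 j' = {}" if "j \<in> S" "j' \<in> S" "j < j'" for j j'
    proof -
      have sj: "Suc j < j'" using S(2) that by blast
      have r': "Suc j' < r" "Suc j < r" using Sr that by auto
      have o: "ks ! j < ks ! Suc j" "ks ! Suc j < ks ! j'" "ks ! j' < ks ! Suc j'"
        using ks_lt sj r' by auto
      have iso: "tree_iso (restrict_tree c1.T {ks ! j, ks ! Suc j, ks ! j', ks ! Suc j'})
                          (restrict_tree c2.T {ks ! j, ks ! Suc j, ks ! j', ks ! Suc j'})"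
      proof -
        have jr: "j < r" "j' < r" using r' by auto
        have n1: "nocut j" "nocut j'" using Sr(2) that(1,2) by auto
        show ?thesis
          by (rule iso_of[OF o ks_n[OF r'(1)] ks_K[OF jr(1)] ks_K[OF r'(2)] ks_K[OF jr(2)] ks_K[OF r'(1)]])
            (use n1 in \<open>simp_all add: nocut_def\<close>)
      qed
      have c: "(tr m (ks ! j) < tr m (ks ! j') \<and> tr m (ks ! j) < tr m (ks ! Suc j') \<and>
                tr m (ks ! Suc j) < tr m (ks ! j') \<and> tr m (ks ! Suc j) < tr m (ks ! Suc j')) \<or>
               (tr m (ks ! j') < tr m (ks ! j) \<and> tr m (ks ! Suc j') < tr m (ks ! j) \<and>
                tr m (ks ! j') < tr m (ks ! Suc j) \<and> tr m (ks ! Suc j') < tr m (ks ! Suc j))"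
        by (rule compat[OF o]) (use ks_n r' iso in auto)
      have "I1 j \<inter> I1 j' = {}" using o by (auto simp: I1_def)
      moreover have "I2 j \<inter> I2 j' = {}" using c by (auto simp: I2_def)
      ultimately show ?thesis by blast
    qed
    have disj1: "I1 j \<inter> I1 j' = {}" and disj2: "I2 j \<inter> I2 j' = {}" if "j \<in> S" "j' \<in> S" "j \<noteq> j'" for j j'
      using disj_lt[of j j'] disj_lt[of j' j] that by (cases j j' rule: linorder_cases; auto)+
    have sum1: "(\<Sum>j\<in>S. card (I1 j)) \<le> m * m"
    proof -
      have "(\<Sum>j\<in>S. card (I1 j)) = card (\<Union>j\<in>S. I1 j)"
      proof -
        have fin': "\<forall>j\<in>S. finite (I1 j)" by (simp add: I1_def)
        have d': "\<forall>i\<in>S. \<forall>j\<in>S. i \<noteq> j \<longrightarrow> I1 i \<inter> I1 j = {}" using disj1 by blast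
        show ?thesis by (rule card_UN_disjoint[OF finS fin' d', symmetric])
      qed
      also have "\<dots> \<le> card {0..<m * m}"
      proof (rule card_mono)
        show "(\<Union>j\<in>S. I1 j) \<subseteq> {0..<m * m}"
        proof
          fix y assume "y \<in> (\<Union>j\<in>S. I1 j)"
          then obtain j where j: "j \<in> S" "y \<in> I1 j" by blast
          have "ks ! Suc j < m * m" using ks_n Sr(1)[OF j(1)] by auto
          then show "y \<in> {0..<m * m}" using j(2) by (auto simp: I1_def)
        qed
      qed simp
      finally show ?thesis by simp
    qed
    have sum2: "(\<Sum>j\<in>S. card (I2 j)) \<le> m * m"
    proof -
      have "(\<Sum>j\<in>S. card (I2 j)) = card (\<Union>j\<in>S. I2 j)"
      proof -
        have fin': "\<forall>j\<in>S. finite (I2 j)" by (simp add: I2_def)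
        have d': "\<forall>i\<in>S. \<forall>j\<in>S. i \<noteq> j \<longrightarrow> I2 i \<inter> I2 j = {}" using disj2 by blast
        show ?thesis by (rule card_UN_disjoint[OF finS fin' d', symmetric])
      qed
      also have "\<dots> \<le> card {0..<m * m}"
      proof (rule card_mono)
        show "(\<Union>j\<in>S. I2 j) \<subseteq> {0..<m * m}"
        proof
          fix y assume "y \<in> (\<Union>j\<in>S. I2 j)"
          then obtain j where j: "j \<in> S" "y \<in> I2 j" by blast
          have "tr m (ks ! j) < m * m" "tr m (ks ! Suc j) < m * m"
            using tr_lt[OF m_pos] ks_n Sr(1)[OF j(1)] by auto
          then show "y \<in> {0..<m * m}" using j(2) by (auto simp: I2_def)
        qed
      qed simp
      finally show ?thesis by simp
    qed
    have each: "m \<le> card (I1 j) + card (I2 j)" if "j \<in> S" for j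
    proof -
      have r': "Suc j < r" using Sr that by auto
      have o: "ks ! j < ks ! Suc j" using ks_lt r' by auto
      have "m \<le> (ks ! Suc j - ks ! j) + (max (tr m (ks ! j)) (tr m (ks ! Suc j)) - min (tr m (ks ! j)) (tr m (ks ! Suc j)))"
        by (rule tr_dist) (use m5 o ks_n r' in auto)
      then show ?thesis by (simp add: I1_def I2_def)
    qed
    have "card S * m \<le> (\<Sum>j\<in>S. card (I1 j) + card (I2 j))"
      using sum_mono[of S "\<lambda>_. m" "\<lambda>j. card (I1 j) + card (I2 j)"] each by simp
    also have "\<dots> \<le> 2 * (m * m)" using sum1 sum2 by (simp add: sum.distrib)
    finally have "card S * m \<le> (2 * m) * m" by (simp add: mult.assoc)
    then show ?thesis using m_pos by simp
  qed
  have good_bound: "card Good \<le> 4 * m"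
  proof -
    have "card {j \<in> Good. even j} \<le> 2 * m"
      by (rule sep_bound) (auto, presburger)
    moreover have "card {j \<in> Good. odd j} \<le> 2 * m"
      by (rule sep_bound) (auto, presburger)
    moreover have "Good = {j \<in> Good. even j} \<union> {j \<in> Good. odd j}" by auto
    ultimately show ?thesis using card_Un_le[of "{j \<in> Good. even j}" "{j \<in> Good. odd j}"] by simp
  qed
  have "m * m \<le> card F + 4 * m + 1"
    using cardF bad_bound cnt good_bound ks(3) by linarith
  then have "real (m * m) \<le> real (card F) + 4 * real m + 1" by linarith
  then show ?thesis using sumF by simp
qed

end

context gap begin

lemma main: "0 < opt_frac XX c1.T c2.T \<and> 4 - 20 / real m \<le> opt_int XX c1.T c2.T / opt_frac XX c1.T c2.T"
proof -
  define M where "M = real m"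
  define B where "B = real (m * m) - 4 * real m - 1"
  have M5: "5 \<le> M" using m5 by (simp add: M_def)
  have BM: "B = M * M - 4 * M - 1" by (simp add: B_def M_def)
  have fb: "1 \<le> opt_frac XX c1.T c2.T" "opt_frac XX c1.T c2.T \<le> M * M / 4"
    using frac_bounds by (auto simp: M_def)
  have B0: "0 \<le> B"
  proof -
    have "5 * M \<le> M * M" using M5 by (intro mult_right_mono) auto
    then show ?thesis using BM M5 by linarith
  qed
  have int_ge: "B \<le> opt_int XX c1.T c2.T"
    unfolding opt_int_def
  proof (rule cInf_greatest)
    have "ip_feasible XX c1.T c2.T (\<lambda>e. 1)"
      unfolding ip_feasible_def
    proof (intro conjI ballI)
      fix Q assume "Q \<in> incompatible_quartets XX c1.T c2.T"
      then have Q: "Q \<subseteq> XX" "card Q = 4" by (simp_all add: incompatible_quartets_def)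
      obtain a b c d where h: "Q = {a, b, c, d}" "a \<noteq> b" "a \<noteq> c" "a \<noteq> d" "b \<noteq> c" "b \<noteq> d" "c \<noteq> d"
        "{c1.pend a, c1.pend b, c1.pend c, c1.pend d} \<subseteq> L_edges c1.T Q" "L_edges c1.T Q \<subseteq> c1.E"
        by (rule L_facts[OF Q])
      have fin: "finite (L_edges c1.T Q)" using h(9) finE by (rule finite_subset)
      have "L_edges c1.T Q \<noteq> {}" using h(8) by auto
      then have "1 \<le> card (L_edges c1.T Q)" using fin by (simp add: Suc_le_eq card_gt_0_iff)
      then show "1 \<le> (\<Sum>e\<in>L_edges c1.T Q. (1::real))" by simp
    next
      fix e show "(1::real) \<in> {0, 1}" by simp
    qed
    then show "{(\<Sum>e\<in>snd c1.T. x e) | x. ip_feasible XX c1.T c2.T x} \<noteq> {}" by blast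
  next
    fix s assume "s \<in> {(\<Sum>e\<in>snd c1.T. x e) | x. ip_feasible XX c1.T c2.T x}"
    then obtain x where x: "s = (\<Sum>e\<in>snd c1.T. x e)" "ip_feasible XX c1.T c2.T x" by blast
    show "B \<le> s" using count[OF x(2)] x(1) by (simp add: sndT1 B_def)
  qed
  define fr where "fr = opt_frac XX c1.T c2.T"
  define it where "it = opt_int XX c1.T c2.T"
  have frpos: "0 < fr" using fb by (simp add: fr_def)
  have Mpos: "0 < M" using M5 by simp
  have r1: "B / fr \<le> it / fr" using int_ge frpos by (simp add: it_def divide_right_mono)
  have r2: "B / (M * M / 4) \<le> B / fr"
    by (rule divide_left_mono) (use fb B0 frpos Mpos in \<open>simp_all add: fr_def\<close>)
  have r3: "4 - 20 / M \<le> B / (M * M / 4)"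
  proof -
    have e2: "4 - 20 / M = (4 * M * M - 20 * M) / (M * M)"
      using Mpos by (simp add: field_simps)
    have "4 * M * M - 20 * M \<le> 4 * M * M - 16 * M - 4" using M5 by linarith
    then have "(4 * M * M - 20 * M) / (M * M) \<le> (4 * M * M - 16 * M - 4) / (M * M)"
      using Mpos by (intro divide_right_mono) auto
    also have "4 * M * M - 16 * M - 4 = B * 4" by (simp add: BM algebra_simps)
    also have "B * 4 / (M * M) = B / (M * M / 4)" by (simp add: divide_divide_eq_right)
    finally show ?thesis using e2 by simp
  qed
  show ?thesis using r1 r2 r3 frpos by (simp add: fr_def it_def M_def)
qed

end

theorem theorem9:
  shows "\<exists>h :: nat \<Rightarrow> real. h \<longlonglongrightarrow> 0 \<and>
    (\<forall>N. \<exists>(X :: nat set) T1 T2. card X \<ge> N \<and> phylo_tree X T1 \<and> phylo_tree X T2 \<and>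
       opt_frac X T1 T2 > 0 \<and>
       opt_int X T1 T2 / opt_frac X T1 T2 \<ge> 4 - h (card X))"
proof -
  define h where "h k = 20 * sqrt (inverse (real k))" for k :: nat
  have lim: "h \<longlonglongrightarrow> 0"
  proof -
    have "(\<lambda>k. inverse (real k)) \<longlonglongrightarrow> 0"
      by (rule tendsto_inverse_0_at_top[OF filterlim_real_sequentially])
    then have "(\<lambda>k. sqrt (inverse (real k))) \<longlonglongrightarrow> sqrt 0" by (rule tendsto_real_sqrt)
    then have "(\<lambda>k. 20 * sqrt (inverse (real k))) \<longlonglongrightarrow> 20 * sqrt 0"
      by (rule tendsto_mult[OF tendsto_const])
    then show ?thesis by (simp add: h_def[abs_def])
  qed
  have "\<forall>N. \<exists>(X :: nat set) T1 T2. card X \<ge> N \<and> phylo_tree X T1 \<and> phylo_tree X T2 \<and>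
       opt_frac X T1 T2 > 0 \<and> opt_int X T1 T2 / opt_frac X T1 T2 \<ge> 4 - h (card X)"
  proof
    fix N :: nat
    define m :: nat where "m = N + 5"
    interpret g: gap m by unfold_locales (simp add: m_def)
    have cardX: "card g.XX = m * m" by simp
    have Nle: "N \<le> m * m"
    proof -
      have "N \<le> m" by (simp add: m_def)
      moreover have "m \<le> m * m" by (rule le_square)
      ultimately show ?thesis by linarith
    qed
    have hval: "h (card g.XX) = 20 / real m"
    proof -
      have "sqrt (inverse (real (m * m))) = inverse (real m)"
        by (simp add: real_sqrt_inverse)
      then show ?thesis by (simp add: h_def cardX divide_inverse)
    qed
    have ph1: "phylo_tree g.XX g.c1.T" by (rule g.c1.phylo)
    have ph2: "phylo_tree g.XX g.c2.T" by (rule g.c2.phylo)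
    show "\<exists>(X :: nat set) T1 T2. card X \<ge> N \<and> phylo_tree X T1 \<and> phylo_tree X T2 \<and>
       opt_frac X T1 T2 > 0 \<and> opt_int X T1 T2 / opt_frac X T1 T2 \<ge> 4 - h (card X)"
      using g.main ph1 ph2 Nle hval cardX by (intro exI[of _ g.XX] exI[of _ g.c1.T] exI[of _ g.c2.T]) simp
  qed
  then show ?thesis using lim by blast
qed

end
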